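(* Let $\tau\subset\mathbb{Z}^4_{\ge 0}$ be a B-facet. Then $\tau$ is of (at least) one of the following four types: (1) a $B_1$-facet: there is an index $i\in\{1,2,3,4\}$ such that exactly one point of $\tau$ has nonzero $i$-th coordinate, and that coordinate equals $1$; (2) a $B_2$-facet: there are distinct indices $i,j$ such that for every point $x\in\tau$ we have $(x_i,x_j)\in\{(0,0),(1,0),(0,1)\}$; (3) a flat border: there are distinct indices $i,j$ and a point $C\in\tau$ with $C_i=C_j=1$ such that $\tau$ contains at least two distinct points $A,B$ with $A_i=A_j=B_i=B_j=0$, and every point of $\tau$ other than $C$ lies in $\{x_i=0\}\cup\{x_j=0\}$; (4) the standard cross-polytope: $\tau=\{(1,1,0,0),(1,0,1,0),(1,0,0,1),(0,1,1,0),(0,1,0,1),(0,0,1,1)\}$.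
   Context: Conventions: a polytope is a finite subset of $\mathbb{Z}^n$; its dimension is the dimension of its affine span. A $k$-simplex is a set of $k+1$ affinely independent points. A $k$-simplex $S\subset\mathbb{Z}^n_{\ge0}$ is a B-simplex if there is a coordinate index $i$ such that exactly $k$ of its vertices lie in the hyperplane $\{x_i=0\}$ and the remaining vertex has $i$-th coordinate equal to $1$ (i.e. it is a pyramid of height $1$ with base on a coordinate hyperplane; for $k=0$ this means the point has some coordinate equal to $1$). A B-facet in $\mathbb{Z}^n_{\ge0}$ is a finite set $\tau\subset\mathbb{Z}^n_{\ge 0}$ whose affine span is a hyperplane $\{x:\langle a,x\rangle=b\}$ with all $a_j>0$ (positive normal covector), such that every $(n-1)$-simplex with vertices in $\tau$ is a B-simplex. *)

theory Defs
  imports "HOL-Analysis.Analysis"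
begin

text \<open>Lattice points of Z^n are modelled as int ^ 'n (the dimension n = CARD('n)).
  Affine notions are computed after the embedding into real ^ 'n.\<close>

definition rvec :: "int ^ 'n \<Rightarrow> real ^ 'n" where
  "rvec x = (\<chi> i. real_of_int (x $ i))"

definition nonneg_pts :: "(int ^ 'n) set \<Rightarrow> bool" where
  "nonneg_pts S \<longleftrightarrow> (\<forall>x\<in>S. \<forall>i. 0 \<le> x $ i)"

definition is_simplex :: "nat \<Rightarrow> (int ^ 'n) set \<Rightarrow> bool" where
  "is_simplex k S \<longleftrightarrow> finite S \<and> card S = k + 1 \<and> \<not> affine_dependent (rvec ` S)"

definition B_simplex :: "(int ^ 'n) set \<Rightarrow> bool" where
  "B_simplex S \<longleftrightarrow> (\<exists>k. is_simplex k S \<and> nonneg_pts S \<and>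
     (\<exists>i. card {v\<in>S. v $ i = 0} = k \<and> (\<forall>v\<in>S. v $ i \<noteq> 0 \<longrightarrow> v $ i = 1)))"

definition B_facet :: "(int ^ 'n) set \<Rightarrow> bool" where
  "B_facet \<tau> \<longleftrightarrow> finite \<tau> \<and> nonneg_pts \<tau> \<and>
     (\<exists>(a :: real ^ 'n) b. (\<forall>j. 0 < a $ j) \<and> affine hull (rvec ` \<tau>) = {x. a \<bullet> x = b}) \<and>
     (\<forall>S\<subseteq>\<tau>. is_simplex (CARD('n) - 1) S \<longrightarrow> B_simplex S)"

definition B1_facet :: "(int ^ 'n) set \<Rightarrow> bool" where
  "B1_facet \<tau> \<longleftrightarrow> (\<exists>i. card {x\<in>\<tau>. x $ i \<noteq> 0} = 1 \<and> (\<forall>x\<in>\<tau>. x $ i \<noteq> 0 \<longrightarrow> x $ i = 1))"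

definition B2_facet :: "(int ^ 'n) set \<Rightarrow> bool" where
  "B2_facet \<tau> \<longleftrightarrow> (\<exists>i j. i \<noteq> j \<and> (\<forall>x\<in>\<tau>. (x $ i, x $ j) \<in> {(0,0),(1,0),(0,1)}))"

definition flat_border :: "(int ^ 'n) set \<Rightarrow> bool" where
  "flat_border \<tau> \<longleftrightarrow> (\<exists>i j C. i \<noteq> j \<and> C \<in> \<tau> \<and> C $ i = 1 \<and> C $ j = 1 \<and>
     (\<exists>A B. A \<in> \<tau> \<and> B \<in> \<tau> \<and> A \<noteq> B \<and> A $ i = 0 \<and> A $ j = 0 \<and> B $ i = 0 \<and> B $ j = 0) \<and>
     (\<forall>x\<in>\<tau>. x \<noteq> C \<longrightarrow> x $ i = 0 \<or> x $ j = 0))"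

definition std_cross_polytope :: "(int ^ 4) set" where
  "std_cross_polytope = {vector [1,1,0,0], vector [1,0,1,0], vector [1,0,0,1],
                         vector [0,1,1,0], vector [0,1,0,1], vector [0,0,1,1]}"

end

theory Submission
  imports Defs
begin

lemma vector_4 [simp]:
 "(vector [x,y,z,w] ::('a::zero)^4)$1 = x"
 "(vector [x,y,z,w] ::('a::zero)^4)$2 = y"
 "(vector [x,y,z,w] ::('a::zero)^4)$3 = z"
 "(vector [x,y,z,w] ::('a::zero)^4)$4 = w"
  unfolding vector_def by simp_all

lemma ex4: "(k::4) = 1 \<or> k = 2 \<or> k = 3 \<or> k = 4" using exhaust_4 by blast

definition m3 :: "'a::comm_ring_1^4 \<Rightarrow> 'a^4 \<Rightarrow> 'a^4 \<Rightarrow> 4 \<Rightarrow> 4 \<Rightarrow> 4 \<Rightarrow> 'a" where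
  "m3 y z w a b c = y$a * (z$b * w$c - z$c * w$b) - y$b * (z$a * w$c - z$c * w$a) + y$c * (z$a * w$b - z$b * w$a)"

definition det4 :: "'a::comm_ring_1^4 \<Rightarrow> 'a^4 \<Rightarrow> 'a^4 \<Rightarrow> 'a^4 \<Rightarrow> 'a" where
  "det4 x y z w = x$1 * m3 y z w 2 3 4 - x$2 * m3 y z w 1 3 4 + x$3 * m3 y z w 1 2 4 - x$4 * m3 y z w 1 2 3"

lemma det4_swap12: "det4 y x z w = - det4 x y z w"
  unfolding det4_def m3_def by (simp add: algebra_simps)
lemma det4_swap23: "det4 x z y w = - det4 x y z w"
  unfolding det4_def m3_def by (simp add: algebra_simps)
lemma det4_swap34: "det4 x y w z = - det4 x y z w"
  unfolding det4_def m3_def by (simp add: algebra_simps)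
lemma det4_rep12: "det4 x x z w = 0"
  unfolding det4_def m3_def by (simp add: algebra_simps)
lemma det4_rep13: "det4 x y x w = 0"
  unfolding det4_def m3_def by (simp add: algebra_simps)
lemma det4_rep14: "det4 x y z x = 0"
  unfolding det4_def m3_def by (simp add: algebra_simps)
lemma det4_rep23: "det4 x y y w = 0"
  unfolding det4_def m3_def by (simp add: algebra_simps)
lemma det4_rep24: "det4 x y z y = 0"
  unfolding det4_def m3_def by (simp add: algebra_simps)
lemma det4_rep34: "det4 x y z z = 0"
  unfolding det4_def m3_def by (simp add: algebra_simps)

definition upd :: "'a^4 \<Rightarrow> 4 \<Rightarrow> 'a \<Rightarrow> 'a^4" where
  "upd x k c = (\<chi> i. if i = k then c else x $ i)"

definition dot4 :: "'a::comm_ring_1^4 \<Rightarrow> 'a^4 \<Rightarrow> 'a" where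
  "dot4 f x = f$1 * x$1 + f$2 * x$2 + f$3 * x$3 + f$4 * x$4"

definition ax :: "4 \<Rightarrow> 'a::comm_ring_1^4" where
  "ax k = (\<chi> i. if i = k then 1 else 0)"

lemma cramer:
  "det4 (upd x1 k (dot4 f x1)) (upd x2 k (dot4 f x2)) (upd x3 k (dot4 f x3)) (upd x4 k (dot4 f x4))
    = f$k * det4 x1 x2 x3 x4"
  using ex4[of k]
  by (elim disjE) (simp_all add: det4_def m3_def upd_def dot4_def algebra_simps)

lemma det4_zero_col:
  "det4 (upd x1 k 0) (upd x2 k 0) (upd x3 k 0) (upd x4 k 0) = 0"
  using ex4[of k]
  by (elim disjE) (simp_all add: det4_def m3_def upd_def)

lemma det4_lin_last:
  "det4 p q r w = dot4 (\<chi> k. det4 p q r (ax k)) w"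
  by (simp add: det4_def m3_def dot4_def ax_def algebra_simps)

lemma ext_zero:
  fixes x1 :: "'a::idom^4"
  assumes "det4 x1 x2 x3 x4 \<noteq> 0"
    and "dot4 f x1 = 0" "dot4 f x2 = 0" "dot4 f x3 = 0" "dot4 f x4 = 0"
  shows "f = 0"
proof -
  have "f$k = 0" for k
    using cramer[of x1 k f x2 x3 x4] assms det4_zero_col[of x1 k x2 x3 x4] by simp
  then show ?thesis by (simp add: vec_eq_iff)
qed

lemma ext_det:
  fixes x1 :: "'a::idom^4"
  assumes "det4 x1 x2 x3 x4 \<noteq> 0"
    and "det4 p q r x1 = 0" "det4 p q r x2 = 0" "det4 p q r x3 = 0" "det4 p q r x4 = 0"
  shows "det4 p q r w = 0"
proof -
  let ?f = "(\<chi> k. det4 p q r (ax k)) :: 'a^4"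
  have "?f = 0"
    by (rule ext_zero[OF assms(1)]) (use assms(2-5) det4_lin_last in metis)+
  then show ?thesis using det4_lin_last[of p q r w] by (simp add: dot4_def)
qed

lemma det4_apx:
  assumes "y$m = 0" "z$m = 0" "w$m = 0"
  shows "det4 x y z w = x$m * det4 (ax m) y z w"
  using ex4[of m] assms
  by (elim disjE) (simp_all add: det4_def m3_def ax_def algebra_simps)

lemma det4_z2:
  assumes "m \<noteq> m'" "y$m = 0" "z$m = 0" "w$m = 0" "y$m' = 0" "z$m' = 0" "w$m' = 0"
  shows "det4 x y z w = 0"
  using ex4[of m] ex4[of m'] assms
  by (elim disjE) (simp_all add: det4_def m3_def)

lemma ne12: "det4 y x z w \<noteq> 0 \<longleftrightarrow> det4 x y z w \<noteq> 0" using det4_swap12[of y x z w] by auto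
lemma ne23: "det4 x z y w \<noteq> 0 \<longleftrightarrow> det4 x y z w \<noteq> 0" using det4_swap23[of x z y w] by auto
lemma ne34: "det4 x y w z \<noteq> 0 \<longleftrightarrow> det4 x y z w \<noteq> 0" using det4_swap34[of x y w z] by auto

definition m2 :: "'a::comm_ring_1^4 \<Rightarrow> 'a^4 \<Rightarrow> 4 \<Rightarrow> 4 \<Rightarrow> 'a" where
  "m2 p q m n = p$m * q$n - p$n * q$m"

lemma det4_axc_m3: assumes "distinct [c,a,b,d]"
  shows "det4 (ax c) y z w = m3 y z w a b d \<or> det4 (ax c) y z w = - m3 y z w a b d"
  using ex4[of c] ex4[of a] ex4[of b] ex4[of d] assms
  by (elim disjE) (simp_all add: det4_def m3_def ax_def algebra_simps)

lemma det4_axax: assumes "distinct [j,c,m,n]"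
  shows "det4 (ax j) (ax c) d (ax m) = d$n \<or> det4 (ax j) (ax c) d (ax m) = - d$n"
  using ex4[of c] ex4[of j] ex4[of m] ex4[of n] assms
  by (elim disjE) (simp_all add: det4_def m3_def ax_def)

lemma det4_axax2: assumes "distinct [j,c,m,n]"
  shows "det4 (ax j) (ax c) p q = m2 p q m n \<or> det4 (ax j) (ax c) p q = - m2 p q m n"
  using ex4[of c] ex4[of j] ex4[of m] ex4[of n] assms
  by (elim disjE) (simp_all add: det4_def m3_def ax_def m2_def algebra_simps)

lemma det4_ax_upd: "det4 (ax k) (upd y k v1) (upd z k v2) (upd w k v3) = det4 (ax k) y z w"
  using ex4[of k] by (elim disjE) (simp_all add: det4_def m3_def ax_def upd_def)

definition rv :: "int^4 \<Rightarrow> real^4" where "rv x = (\<chi> i. real_of_int (x$i))"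

lemma rv_nth[simp]: "rv x $ i = real_of_int (x $ i)" by (simp add: rv_def)

lemma det4_rot: "det4 w x y z = - det4 x y z w"
  using det4_swap12[of w x y z] det4_swap23[of x w y z] det4_swap34[of x y w z] by simp

lemma det4_rowop: "det4 p (q - p) (r - p) w = det4 p q r w"
  by (simp add: det4_def m3_def algebra_simps)

lemma det4_rowop1: "det4 p (q - p) r w = det4 p q r w"
  by (simp add: det4_def m3_def algebra_simps)

lemma det4_rv: "det4 (rv x) (rv y) (rv z) (rv w) = real_of_int (det4 x y z w)"
  unfolding det4_def m3_def rv_nth by (simp only: of_int_mult of_int_diff of_int_add)

lemma rv_ax: "rv (ax m) = ax m"
  by (simp add: vec_eq_iff ax_def)

lemma par3:
  fixes da db dc za zb zc aa ab ac bb :: real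
  assumes "da*zb = db*za" "da*zc = dc*za" "db*zc = dc*zb"
    and "aa*da + ab*db + ac*dc = 0" and "aa*za + ab*zb + ac*zc = bb" and "bb \<noteq> 0"
  shows "da = 0 \<and> db = 0 \<and> dc = 0"
proof -
  have "da * bb = da * (aa*za + ab*zb + ac*zc)" using assms(5) by simp
  also have "\<dots> = aa*(da*za) + ab*(da*zb) + ac*(da*zc)" by (simp add: algebra_simps)
  also have "\<dots> = za * (aa*da + ab*db + ac*dc)" using assms(1,2) by (simp add: algebra_simps)
  finally have 1: "da = 0" using assms(4,6) by simp
  have "db * bb = db * (aa*za + ab*zb + ac*zc)" using assms(5) by simp
  also have "\<dots> = aa*(db*za) + ab*(db*zb) + ac*(db*zc)" by (simp add: algebra_simps)
  also have "\<dots> = zb * (aa*da + ab*db + ac*dc)" using assms(1,3) by (simp add: algebra_simps)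
  finally have 2: "db = 0" using assms(4,6) by simp
  have "dc * bb = dc * (aa*za + ab*zb + ac*zc)" using assms(5) by simp
  also have "\<dots> = aa*(dc*za) + ab*(dc*zb) + ac*(dc*zc)" by (simp add: algebra_simps)
  also have "\<dots> = zc * (aa*da + ab*db + ac*dc)" using assms(2,3) by (simp add: algebra_simps)
  finally have 3: "dc = 0" using assms(4,6) by simp
  show ?thesis using 1 2 3 by simp
qed

lemma line3_core:
  fixes xk xl yk yl wk wl :: int
  assumes "0 \<le> xk" "0 \<le> xl" "0 \<le> yk" "0 \<le> yl" "0 \<le> wk" "0 \<le> wl"
   and "\<not>(xk = 0 \<and> yk = 0)" "\<not>(xk = 0 \<and> wk = 0)" "\<not>(yk = 0 \<and> wk = 0)"
   and "\<not>(xl = 0 \<and> yl = 0)" "\<not>(xl = 0 \<and> wl = 0)" "\<not>(yl = 0 \<and> wl = 0)"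
   and "\<not>(xk \<le> yk \<and> xl \<le> yl)" "\<not>(yk \<le> xk \<and> yl \<le> xl)"
   and "\<not>(xk \<le> wk \<and> xl \<le> wl)" "\<not>(wk \<le> xk \<and> wl \<le> xl)"
   and "\<not>(yk \<le> wk \<and> yl \<le> wl)" "\<not>(wk \<le> yk \<and> wl \<le> yl)"
   and "(xk = 0 \<and> yk = 1) \<or> (xk = 1 \<and> yk = 0) \<or> (xl = 0 \<and> yl = 1) \<or> (xl = 1 \<and> yl = 0)"
   and "(xk = 0 \<and> wk = 1) \<or> (xk = 1 \<and> wk = 0) \<or> (xl = 0 \<and> wl = 1) \<or> (xl = 1 \<and> wl = 0)"
   and "(yk = 0 \<and> wk = 1) \<or> (yk = 1 \<and> wk = 0) \<or> (yl = 0 \<and> wl = 1) \<or> (yl = 1 \<and> wl = 0)"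
  shows False
  using assms by smt

definition unit4 :: "int^4 \<Rightarrow> int^4 \<Rightarrow> int^4 \<Rightarrow> int^4 \<Rightarrow> bool" where
  "unit4 x y z w \<longleftrightarrow> (\<exists>m. (x$m = 1 \<and> y$m = 0 \<and> z$m = 0 \<and> w$m = 0) \<or> (x$m = 0 \<and> y$m = 1 \<and> z$m = 0 \<and> w$m = 0)
     \<or> (x$m = 0 \<and> y$m = 0 \<and> z$m = 1 \<and> w$m = 0) \<or> (x$m = 0 \<and> y$m = 0 \<and> z$m = 0 \<and> w$m = 1))"

lemma card4: "card (UNIV::4 set) = 4" by simp

lemma cover4: assumes "distinct [i,j,k,l::4]" shows "n = i \<or> n = j \<or> n = k \<or> n = l"
proof -
  have "card (set [i,j,k,l]) = 4" using assms distinct_card by fastforce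
  then have "set [i,j,k,l] = UNIV" using card4 by (metis card_subset_eq finite subset_UNIV)
  then show ?thesis by auto
qed

lemma dist3_ex: assumes "distinct [i,j,k::4]" shows "\<exists>l. distinct [i,j,k,l]"
proof -
  have "card {i,j,k} = 3" using assms by simp
  then have "{i,j,k} \<noteq> UNIV" using card4 by (metis numeral_eq_iff semiring_norm(87) semiring_norm(89))
  then obtain l where "l \<notin> {i,j,k}" by blast
  then show ?thesis using assms by auto
qed

lemma dist2_ex: assumes "c \<noteq> (j::4)" shows "\<exists>m n. distinct [c,j,m,n]"
proof -
  have c2: "card {c,j} = 2" using assms by simp
  have "{c,j} \<noteq> UNIV"
  proof assume "{c,j} = UNIV" then have "card {c,j} = 4" using card4 by simp then show False using c2 by simp qed
  then obtain m where m: "m \<notin> {c,j}" by blast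
  then have "distinct [c,j,m]" using assms by auto
  then show ?thesis using dist3_ex by blast
qed

lemma dist1_ex: "\<exists>k1 k2 k3. distinct [c::4,k1,k2,k3]"
proof -
  obtain k1 where "k1 \<noteq> c"
  proof (cases "c = 1")
    case True then show ?thesis using that[of 2] by simp
  next
    case False then show ?thesis using that[of 1] by simp
  qed
  then show ?thesis using dist2_ex[of c k1] by (metis distinct_length_2_or_more)
qed

lemma dot4_sum: "dot4 f x = (\<Sum>n\<in>UNIV. f$n * x$n)"
  by (simp add: dot4_def sum_4)

lemma dot4_perm: assumes "distinct [i,j,k,l::4]" shows "dot4 f x = f$i*x$i + f$j*x$j + f$k*x$k + f$l*x$l"
proof -
  have "set [i,j,k,l] = UNIV" using cover4[OF assms] by auto
  then have "dot4 f x = (\<Sum>n\<in>{i,j,k,l}. f$n * x$n)" by (simp add: dot4_sum)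
  then show ?thesis using assms by (simp add: algebra_simps)
qed


lemma CPalg:
  fixes A B C D E F :: int
  assumes pos: "A \<ge> 1" "B \<ge> 1" and s1: "A + B = C + D" and s2: "A + B = E + F"
    and q1: "B*C = A*D" and q2: "B*F = A*E" and q3: "C*F = D*E"
  shows "A = B \<and> C = A \<and> D = A \<and> E = A \<and> F = A"
proof -
  have "C * (A+B) = A * (A+B)" using q1 s1 by algebra
  then have cA: "C = A" using pos by simp
  have dB: "D = B" using s1 cA by simp
  have "E * (A+B) = B * (A+B)" using q2 s2 by algebra
  then have eB: "E = B" using pos by simp
  have fA: "F = A" using s2 eB by simp
  have "A * A = B * B" using q3 cA dB eB fA by (simp add: mult.commute)
  then have "(A - B) * (A + B) = 0" by algebra
  then have "A = B" using pos by simp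
  then show ?thesis using cA dB eB fA by simp
qed

lemma CP_mem: "x \<in> std_cross_polytope \<longleftrightarrow> (\<forall>n. x$n = 0 \<or> x$n = 1) \<and> x$1 + x$2 + x$3 + x$4 = 2"
proof
  assume "x \<in> std_cross_polytope"
  then show "(\<forall>n. x$n = 0 \<or> x$n = 1) \<and> x$1 + x$2 + x$3 + x$4 = 2"
    unfolding std_cross_polytope_def by (auto simp: forall_4)
next
  assume h: "(\<forall>n. x$n = 0 \<or> x$n = 1) \<and> x$1 + x$2 + x$3 + x$4 = 2"
  have v: "x = vector [x$1, x$2, x$3, x$4]" by (simp add: vec_eq_iff forall_4)
  have "x$1 = 0 \<or> x$1 = 1" "x$2 = 0 \<or> x$2 = 1" "x$3 = 0 \<or> x$3 = 1" "x$4 = 0 \<or> x$4 = 1" using h by auto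
  then show "x \<in> std_cross_polytope" unfolding std_cross_polytope_def using h
    by (subst v, elim disjE) (simp_all add: vec_eq_iff forall_4)
qed

lemma card_CP: "card std_cross_polytope = 6"
  unfolding std_cross_polytope_def by (simp add: vec_eq_iff forall_4)

lemma sum4_perm: assumes "distinct [c,j,m,l::4]" shows "(x::int^4)$1 + x$2 + x$3 + x$4 = x$c + x$j + x$m + x$l"
  using dot4_perm[OF assms, of "\<chi> _. 1" x] by (simp add: dot4_def)

lemma card_filter4:
  assumes "distinct [x,y,z,w]"
  shows "card {v\<in>{x,y,z,w}. P v} = (if P x then 1 else 0) + (if P y then 1 else 0) + (if P z then 1 else 0) + (if P w then 1 else 0)"
proof -
  have e: "{v\<in>{x,y,z,w}. P v} = (if P x then {x} else {}) \<union> (if P y then {y} else {}) \<union> (if P z then {z} else {}) \<union> (if P w then {w} else {})"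
    by auto
  show ?thesis unfolding e using assms
    by (cases "P x"; cases "P y"; cases "P z"; cases "P w") (auto simp: card_insert_if)
qed

lemma det4_comb1: "det4 (a *\<^sub>R x + b *\<^sub>R y + c *\<^sub>R z + d *\<^sub>R w) y z w = a * det4 x y z (w::real^4)"
  by (simp add: det4_def m3_def algebra_simps)
lemma det4_comb2: "det4 x (a *\<^sub>R x + b *\<^sub>R y + c *\<^sub>R z + d *\<^sub>R w) z w = b * det4 x y z (w::real^4)"
  by (simp add: det4_def m3_def algebra_simps)
lemma det4_comb3: "det4 x y (a *\<^sub>R x + b *\<^sub>R y + c *\<^sub>R z + d *\<^sub>R w) w = c * det4 x y z (w::real^4)"
  by (simp add: det4_def m3_def algebra_simps)
lemma det4_comb4: "det4 x y z (a *\<^sub>R x + b *\<^sub>R y + c *\<^sub>R z + d *\<^sub>R w) = d * det4 x y z (w::real^4)"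
  by (simp add: det4_def m3_def algebra_simps)

lemma rv_rvec: "rv = rvec" by (rule ext) (simp add: rv_def rvec_def)

lemma inner_dot4: "(a::real^4) \<bullet> v = dot4 a v" by (simp add: inner_vec_def sum_4 dot4_def)

lemma rv_inj: "rv x = rv y \<Longrightarrow> x = y" by (simp add: vec_eq_iff)

locale bfc =
  fixes T :: "(int^4) set" and al :: "real^4" and b :: real
  assumes fin: "finite T"
  and nonneg: "\<And>x i. x \<in> T \<Longrightarrow> 0 \<le> x$i"
  and alpos: "\<And>k. 0 < al$k"
  and bpos: "0 < b"
  and hyp: "\<And>x. x \<in> T \<Longrightarrow> dot4 al (rv x) = b"
  and key: "\<And>f. (\<And>x. x \<in> T \<Longrightarrow> dot4 f (rv x) = 0) \<Longrightarrow> f = 0"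
  and basis: "\<And>x y z w. x\<in>T \<Longrightarrow> y\<in>T \<Longrightarrow> z\<in>T \<Longrightarrow> w\<in>T \<Longrightarrow> det4 x y z w \<noteq> 0 \<Longrightarrow> unit4 x y z w"
begin

lemma hyp4: "x \<in> T \<Longrightarrow> distinct [i,j,k,l] \<Longrightarrow> al$i*x$i + al$j*x$j + al$k*x$k + al$l*x$l = b"
  using hyp[of x] dot4_perm[of i j k l al "rv x"] by simp

lemma coord_le: assumes "x \<in> T" shows "al$k * x$k \<le> b"
proof -
  have p: "0 \<le> al$n * x$n" for n using alpos[of n] nonneg[OF assms, of n] by simp
  show ?thesis using ex4[of k] hyp[OF assms] p[of 1] p[of 2] p[of 3] p[of 4]
    by (elim disjE) (simp_all add: dot4_def)
qed

lemma two_le: assumes "x \<in> T" "k \<noteq> l" shows "al$k * x$k + al$l * x$l \<le> b"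
proof -
  have p: "0 \<le> al$n * x$n" for n using alpos[of n] nonneg[OF assms(1), of n] by simp
  show ?thesis using ex4[of k] ex4[of l] assms(2) hyp[OF assms(1)] p[of 1] p[of 2] p[of 3] p[of 4]
    by (elim disjE) (simp_all add: dot4_def)
qed

lemma heq: assumes "x \<in> T" "y \<in> T" "\<And>n. n \<noteq> m \<Longrightarrow> x$n = y$n" shows "x = y"
proof -
  have e: "dot4 al (rv x) = dot4 al (rv y)" using hyp assms by simp
  have "x$m = y$m"
    using ex4[of m] e assms(3)[of 1] assms(3)[of 2] assms(3)[of 3] assms(3)[of 4] alpos[of m]
    by (elim disjE) (simp_all add: dot4_def)
  then show ?thesis using assms(3) by (metis vec_eq_iff)
qed

lemma heq3: assumes "x \<in> T" "y \<in> T" "distinct [i,j,k]" "x$i = y$i" "x$j = y$j" "x$k = y$k" shows "x = y"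
proof -
  obtain l where l: "distinct [i,j,k,l]" using dist3_ex[OF assms(3)] by blast
  show ?thesis
  proof (rule heq[OF assms(1,2), of l])
    fix n assume "n \<noteq> l"
    then have "n = i \<or> n = j \<or> n = k" using cover4[OF l, of n] by blast
    then show "x$n = y$n" using assms(4-6) by blast
  qed
qed

lemma antichain: assumes "x \<in> T" "y \<in> T" "\<And>n. x$n \<le> y$n" shows "x = y"
proof -
  have e: "dot4 al (rv x) = dot4 al (rv y)" using hyp assms by simp
  have p: "al$n * x$n \<le> al$n * y$n" for n using alpos[of n] assms(3)[of n] by simp
  have s: "al$1*x$1 + al$2*x$2 + al$3*x$3 + al$4*x$4 = al$1*y$1 + al$2*y$2 + al$3*y$3 + al$4*y$4"
    using e by (simp add: dot4_def)
  have q: "al$1*x$1 = al$1*y$1" "al$2*x$2 = al$2*y$2" "al$3*x$3 = al$3*y$3" "al$4*x$4 = al$4*y$4"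
    using s p[of 1] p[of 2] p[of 3] p[of 4] by linarith+
  have "x$n = y$n" for n
  proof -
    have "al$n * x$n = al$n * y$n" using ex4[of n] q by (elim disjE) simp_all
    then show ?thesis using alpos[of n] by simp
  qed
  then show ?thesis by (simp add: vec_eq_iff)
qed

lemma nz: assumes "x \<in> T" shows "\<exists>n. x$n \<noteq> 0"
proof (rule ccontr)
  assume "\<not> ?thesis"
  then have "dot4 al (rv x) = 0" by (simp add: dot4_def)
  then show False using hyp[OF assms] bpos by simp
qed

lemma int2: "x \<in> T \<Longrightarrow> x$i \<noteq> 0 \<Longrightarrow> x$i \<noteq> 1 \<Longrightarrow> x$i \<ge> 2"
  using nonneg[of x i] by linarith

definition col01 :: "4 \<Rightarrow> bool" where "col01 c \<longleftrightarrow> (\<forall>x\<in>T. x$c = 0 \<or> x$c = 1)"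

definition ctx :: "4 \<Rightarrow> int^4 \<Rightarrow> int^4 \<Rightarrow> int^4 \<Rightarrow> int^4 \<Rightarrow> bool" where
  "ctx c a s1 s2 s3 \<longleftrightarrow> a\<in>T \<and> s1\<in>T \<and> s2\<in>T \<and> s3\<in>T \<and> det4 a s1 s2 s3 \<noteq> 0 \<and> a$c = 1 \<and> s1$c = 0 \<and> s2$c = 0 \<and> s3$c = 0"

lemma not01: assumes "\<not> col01 c" obtains q where "q \<in> T" "q$c \<ge> 2"
  using assms int2 unfolding col01_def by blast


lemma apx_ne: fixes x :: "int^4" assumes "det4 a y z w \<noteq> 0" "a$m \<noteq> 0" "y$m = 0" "z$m = 0" "w$m = 0" "x$m \<noteq> 0"
  shows "det4 x y z w \<noteq> 0"
  using det4_apx[of y m z w x] det4_apx[of y m z w a] assms by simp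

lemma zero_all: assumes "x \<in> T" "distinct [i,j,k,l]" "x$i = 0" "x$j = 0" "x$k = 0" "x$l = 0" shows False
  using nz[OF assms(1)] cover4[OF assms(2)] assms(3-6) by metis

lemma z01_3:
  assumes d: "distinct [i,j,k]" and T: "q \<in> T" "r \<in> T" "t1 \<in> T" "t2 \<in> T"
    and q: "q$i \<ge> 2" "q$j = 0" "q$k = 0" and r: "r$j \<ge> 2" "r$k = 0"
    and t1: "t1$i = 0" "t1$j = 0" "t1$k = 0" and t2: "t2$i = 0" "t2$j = 0" "t2$k = 1"
    and D: "det4 t2 r q t1 \<noteq> 0"
  shows "\<exists>c a s1 s2 s3. ctx c a s1 s2 s3 \<and> col01 c"
proof (cases "col01 k")
  case True
  then show ?thesis using T t2 r q t1 D unfolding ctx_def by blast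
next
  case False
  then obtain s where s: "s \<in> T" "s$k \<ge> 2" by (rule not01)
  have D3: "det4 s r q t1 \<noteq> 0" by (rule apx_ne[OF D, where m=k]) (use t2 r q t1 s in auto)
  from basis[OF s(1) T(2) T(1) T(3) D3] obtain m where
    m: "(s$m = 1 \<and> r$m = 0 \<and> q$m = 0 \<and> t1$m = 0) \<or> (s$m = 0 \<and> r$m = 1 \<and> q$m = 0 \<and> t1$m = 0)
     \<or> (s$m = 0 \<and> r$m = 0 \<and> q$m = 1 \<and> t1$m = 0) \<or> (s$m = 0 \<and> r$m = 0 \<and> q$m = 0 \<and> t1$m = 1)"
    unfolding unit4_def by blast
  have mi: "m \<noteq> i"
  proof assume "m = i" then have "q$m \<ge> 2" using q(1) by simp then show False using m by auto qed
  have mj: "m \<noteq> j"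
  proof assume "m = j" then have "r$m \<ge> 2" "t1$m = 0" using r(1) t1(2) by simp_all then show False using m by auto qed
  have mk: "m \<noteq> k"
  proof assume "m = k" then have "s$m \<ge> 2" "t1$m = 0" using s(2) t1(3) by simp_all then show False using m by auto qed
  have dm: "distinct [i,j,k,m]" using d mi mj mk by auto
  have t1m: "t1$m = 1" using m zero_all[OF T(3) dm t1] by auto
  have A1: "al$m * t1$m = b" using hyp4[OF T(3) dm] t1 by simp
  have A2: "al$k * t2$k + al$m * t2$m = b" using hyp4[OF T(4) dm] t2 by simp
  have "al$k > 0" "al$m > 0" using alpos by auto
  have "t2$m < 1"
  proof (rule ccontr)
    assume "\<not> t2$m < 1"
    then have "al$m * t2$m \<ge> al$m * 1" using \<open>al$m > 0\<close> by simp
    then show False using A1 A2 t1m t2 \<open>al$k > 0\<close> by simp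
  qed
  then have "t2$m = 0" using nonneg[OF T(4), of m] by linarith
  then have "al$k = b" using A1 A2 t1m t2 by simp
  moreover have "al$k * s$k \<le> b" by (rule coord_le[OF s(1)])
  ultimately have "b * real_of_int (s$k) \<le> b" by simp
  moreover have "b * 2 \<le> b * real_of_int (s$k)" using s(2) bpos by (intro mult_left_mono) simp_all
  ultimately show ?thesis using bpos by linarith
qed

lemma z01_2:
  assumes ij: "i \<noteq> j" and T: "q \<in> T" "t1 \<in> T" "t2 \<in> T" "t3 \<in> T"
    and q: "q$i \<ge> 2" "q$j = 0"
    and t: "t1$i = 0" "t2$i = 0" "t3$i = 0" "t1$j = 0" "t2$j = 0" "t3$j = 1"
    and D: "det4 t3 q t1 t2 \<noteq> 0"
  shows "\<exists>c a s1 s2 s3. ctx c a s1 s2 s3 \<and> col01 c"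
proof (cases "col01 j")
  case True
  then show ?thesis using T t q D unfolding ctx_def by blast
next
  case False
  then obtain r where r: "r \<in> T" "r$j \<ge> 2" by (rule not01)
  have D2: "det4 r q t1 t2 \<noteq> 0" by (rule apx_ne[OF D, where m=j]) (use t q r in auto)
  from basis[OF r(1) T(1) T(2) T(3) D2] obtain m where
    m: "(r$m = 1 \<and> q$m = 0 \<and> t1$m = 0 \<and> t2$m = 0) \<or> (r$m = 0 \<and> q$m = 1 \<and> t1$m = 0 \<and> t2$m = 0)
     \<or> (r$m = 0 \<and> q$m = 0 \<and> t1$m = 1 \<and> t2$m = 0) \<or> (r$m = 0 \<and> q$m = 0 \<and> t1$m = 0 \<and> t2$m = 1)"
    unfolding unit4_def by blast
  have mj: "m \<noteq> j"
  proof assume "m = j" then have "r$m \<ge> 2" "t1$m = 0" "t2$m = 0" "q$m = 0" using r(2) t q by simp_all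
    then show False using m by auto qed
  show ?thesis
  proof -
    { assume c1: "r$m = 1 \<and> q$m = 0 \<and> t1$m = 0 \<and> t2$m = 0"
      have "det4 t3 q t1 t2 = 0" by (rule det4_z2[of j m]) (use mj c1 q t in auto)
      then have False using D by simp }
    moreover
    { assume c2: "r$m = 0 \<and> q$m = 1 \<and> t1$m = 0 \<and> t2$m = 0"
      have mi: "m \<noteq> i" using c2 q(1) by auto
      have "t1 = t2" by (rule heq3[OF T(2) T(3), of i j m]) (use mi mj ij c2 t in auto)
      then have False using D det4_rep34[of t3 q t2] by simp }
    moreover
    { assume c3: "r$m = 0 \<and> q$m = 0 \<and> t1$m = 1 \<and> t2$m = 0"
      have mi: "m \<noteq> i" using c3 t by auto
      have D': "det4 t1 r q t2 \<noteq> 0" using D2 by (metis ne12 ne23)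
      have ?thesis by (rule z01_3[of i j m q r t2 t1]) (use ij mi mj T r q t c3 D' in auto) }
    moreover
    { assume c4: "r$m = 0 \<and> q$m = 0 \<and> t1$m = 0 \<and> t2$m = 1"
      have mi: "m \<noteq> i" using c4 t by auto
      have D': "det4 t2 r q t1 \<noteq> 0" using D2 by (metis ne12 ne23 ne34)
      have ?thesis by (rule z01_3[of i j m q r t1 t2]) (use ij mi mj T r q t c4 D' in auto) }
    ultimately show ?thesis using m by blast
  qed
qed

lemma z01_1:
  assumes C: "ctx i p t1 t2 t3"
  shows "\<exists>c a s1 s2 s3. ctx c a s1 s2 s3 \<and> col01 c"
proof (cases "col01 i")
  case True
  then show ?thesis using C by blast
next
  case False
  then obtain q where q: "q \<in> T" "q$i \<ge> 2" by (rule not01)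
  from C have T: "p \<in> T" "t1 \<in> T" "t2 \<in> T" "t3 \<in> T" and D: "det4 p t1 t2 t3 \<noteq> 0"
    and t: "p$i = 1" "t1$i = 0" "t2$i = 0" "t3$i = 0" unfolding ctx_def by auto
  have D1: "det4 q t1 t2 t3 \<noteq> 0" by (rule apx_ne[OF D, where m=i]) (use t q in auto)
  from basis[OF q(1) T(2) T(3) T(4) D1] obtain m where
    m: "(q$m = 1 \<and> t1$m = 0 \<and> t2$m = 0 \<and> t3$m = 0) \<or> (q$m = 0 \<and> t1$m = 1 \<and> t2$m = 0 \<and> t3$m = 0)
     \<or> (q$m = 0 \<and> t1$m = 0 \<and> t2$m = 1 \<and> t3$m = 0) \<or> (q$m = 0 \<and> t1$m = 0 \<and> t2$m = 0 \<and> t3$m = 1)"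
    unfolding unit4_def by blast
  have mi: "m \<noteq> i"
  proof assume "m = i" then have "q$m \<ge> 2" using q by simp then show False using m by auto qed
  show ?thesis
  proof -
    { assume c1: "q$m = 1 \<and> t1$m = 0 \<and> t2$m = 0 \<and> t3$m = 0"
      have "det4 p t1 t2 t3 = 0" by (rule det4_z2[of i m]) (use mi c1 t in auto)
      then have False using D by simp }
    moreover
    { assume c: "q$m = 0 \<and> t1$m = 1 \<and> t2$m = 0 \<and> t3$m = 0"
      have D': "det4 t1 q t2 t3 \<noteq> 0" using D1 by (metis ne12)
      have ?thesis by (rule z01_2[of i m q t2 t3 t1]) (use mi T q t c D' in auto) }
    moreover
    { assume c: "q$m = 0 \<and> t1$m = 0 \<and> t2$m = 1 \<and> t3$m = 0"
      have D': "det4 t2 q t1 t3 \<noteq> 0" using D1 by (metis ne12 ne23)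
      have ?thesis by (rule z01_2[of i m q t1 t3 t2]) (use mi T q t c D' in auto) }
    moreover
    { assume c: "q$m = 0 \<and> t1$m = 0 \<and> t2$m = 0 \<and> t3$m = 1"
      have D': "det4 t3 q t1 t2 \<noteq> 0" using D1 by (metis ne12 ne23 ne34)
      have ?thesis by (rule z01_2[of i m q t1 t2 t3]) (use mi T q t c D' in auto) }
    ultimately show ?thesis using m by blast
  qed
qed

definition NC :: "int^4 \<Rightarrow> int^4 \<Rightarrow> int^4 \<Rightarrow> bool" where
  "NC p q r \<longleftrightarrow> (\<exists>k. det4 (ax k) p q r \<noteq> 0)"

lemma notNC_all: assumes "\<not> NC p q r" shows "det4 p q r w = 0"
proof -
  have "(\<chi> k. det4 p q r (ax k)) = (0::int^4)"
    using assms det4_rot[of "ax _" p q r] unfolding NC_def by (simp add: vec_eq_iff)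
  then show ?thesis using det4_lin_last[of p q r w] by (simp add: dot4_def)
qed

lemma NCg:
  assumes T: "p \<in> T" "q \<in> T" "r \<in> T" and cj: "c \<noteq> j"
    and c: "p$c \<noteq> 0" "q$c = p$c" "r$c = p$c" and j: "q$j = p$j" "r$j \<noteq> p$j" and pq: "p \<noteq> q"
  shows "NC p q r"
proof (rule ccontr)
  assume nc: "\<not> NC p q r"
  obtain m n where d: "distinct [c,j,m,n]" using dist2_ex[OF cj] by blast
  let ?d = "q - p" and ?e = "r - p"
  have A: "det4 p ?d ?e w = 0" for w using notNC_all[OF nc, of w] det4_rowop[of p q r w] by simp
  have key2: "?d$n' = 0" if "distinct [j,c,m',n']" for m' n'
  proof -
    have "det4 p ?d ?e (ax m') = p$c * det4 (ax c) ?d ?e (ax m')"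
      by (rule det4_apx) (use c that in \<open>auto simp: ax_def\<close>)
    moreover have "det4 (ax c) ?d ?e (ax m') = det4 ?e (ax c) ?d (ax m')"
      using det4_swap12[of "ax c" ?e ?d "ax m'"] det4_swap23[of "ax c" ?d ?e "ax m'"] by simp
    moreover have "det4 ?e (ax c) ?d (ax m') = ?e$j * det4 (ax j) (ax c) ?d (ax m')"
      by (rule det4_apx) (use j cj that in \<open>auto simp: ax_def\<close>)
    ultimately have "p$c * (?e$j * det4 (ax j) (ax c) ?d (ax m')) = 0" using A[of "ax m'"] by simp
    then have "det4 (ax j) (ax c) ?d (ax m') = 0" using c j by simp
    then show ?thesis using det4_axax[OF that, of ?d] by auto
  qed
  have "?d$n = 0" by (rule key2[of m]) (use d in auto)
  moreover have "?d$m = 0" by (rule key2[of n]) (use d in auto)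
  moreover have "?d$c = 0" "?d$j = 0" using c j by simp_all
  ultimately have "?d$i = 0" for i using cover4[OF d, of i] by auto
  then have "q = p" by (simp add: vec_eq_iff)
  then show False using pq by simp
qed

lemma COL:
  assumes T: "x \<in> T" "y \<in> T" "w \<in> T" and cm: "c \<noteq> m"
    and c: "x$c = 1" "y$c = 1" "w$c = 1" and m: "x$m = v" "y$m = v" "w$m = v"
  shows "det4 (ax m) x y w = 0"
proof (rule ccontr)
  assume "det4 (ax m) x y w \<noteq> 0"
  then have D: "det4 (ax m) (rv x) (rv y) (rv w) \<noteq> 0"
    using det4_rv[of "ax m" x y w] rv_ax[of m] by simp
  let ?f = "al - (b - al$m * v) *\<^sub>R ax c - al$m *\<^sub>R ax m :: real^4"
  have f1: "dot4 ?f (rv u) = 0" if "u \<in> T" "u$c = 1" "u$m = v" for u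
  proof -
    have "dot4 ?f (rv u) = dot4 al (rv u) - (b - al$m * v) * (rv u)$c - al$m * (rv u)$m"
      using ex4[of c] ex4[of m] by (elim disjE) (simp_all add: dot4_def ax_def algebra_simps)
    then show ?thesis using hyp[OF that(1)] that by simp
  qed
  have f2: "dot4 ?f (ax m) = 0"
  proof -
    have "dot4 ?f (ax m) = al$m - (b - al$m * v) * (ax m :: real^4)$c - al$m"
      using ex4[of c] ex4[of m] cm by (elim disjE) (simp_all add: dot4_def ax_def algebra_simps)
    then show ?thesis using cm by (simp add: ax_def)
  qed
  have "?f = 0" by (rule ext_zero[OF D f2 f1[OF T(1) c(1) m(1)] f1[OF T(2) c(2) m(2)] f1[OF T(3) c(3) m(3)]])
  moreover obtain n n' where "distinct [c,m,n,n']" using dist2_ex[OF cm] by blast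
  ultimately have "?f$n = 0" "n \<noteq> c" "n \<noteq> m" by auto
  then show False using alpos[of n] by (simp add: ax_def)
qed

lemma W3:
  assumes T: "x \<in> T" "y \<in> T" "w \<in> T" "z \<in> T"
    and c: "x$c = 1" "y$c = 1" "w$c = 1" "z$c = 0" and nc: "NC x y w"
  shows "det4 x y w z \<noteq> 0"
proof
  assume D0: "det4 x y w z = 0"
  obtain k where k: "det4 (ax k) x y w \<noteq> 0" using nc unfolding NC_def by blast
  let ?f = "al - b *\<^sub>R ax c :: real^4"
  have fv: "dot4 ?f (rv u) = b - b * u$c" if "u \<in> T" for u
  proof -
    have "dot4 ?f (rv u) = dot4 al (rv u) - b * (rv u)$c"
      using ex4[of c] by (elim disjE) (simp_all add: dot4_def ax_def algebra_simps)
    then show ?thesis using hyp[OF that] by simp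
  qed
  have "det4 (upd (rv x) k (dot4 ?f (rv x))) (upd (rv y) k (dot4 ?f (rv y))) (upd (rv w) k (dot4 ?f (rv w))) (upd (rv z) k (dot4 ?f (rv z)))
        = ?f$k * det4 (rv x) (rv y) (rv w) (rv z)" by (rule cramer)
  also have "\<dots> = 0" using D0 det4_rv[of x y w z] by simp
  finally have E: "det4 (upd (rv x) k 0) (upd (rv y) k 0) (upd (rv w) k 0) (upd (rv z) k b) = 0"
    using fv[OF T(1)] fv[OF T(2)] fv[OF T(3)] fv[OF T(4)] c by simp
  have "det4 (upd (rv z) k b) (upd (rv x) k 0) (upd (rv y) k 0) (upd (rv w) k 0)
      = (upd (rv z) k b)$k * det4 (ax k) (upd (rv x) k 0) (upd (rv y) k 0) (upd (rv w) k 0)"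
    by (rule det4_apx) (simp_all add: upd_def)
  also have "\<dots> = b * det4 (ax k) (rv x) (rv y) (rv w)" by (simp only: det4_ax_upd) (simp add: upd_def)
  finally have "b * det4 (ax k) (rv x) (rv y) (rv w) = 0"
    using E det4_rot[of "upd (rv z) k b" "upd (rv x) k 0" "upd (rv y) k 0" "upd (rv w) k 0"] by simp
  then have "det4 (ax k) (rv x) (rv y) (rv w) = 0" using bpos by simp
  then show False using k det4_rv[of "ax k" x y w] rv_ax[of k] by simp
qed

lemma W2:
  assumes C: "ctx c a t1 t2 t3" and T: "p1 \<in> T" "p2 \<in> T" "z \<in> T"
    and c: "p1$c = 1" "p2$c = 1" "z$c = 0" and ne: "p1 \<noteq> p2"
  shows "det4 p1 p2 z t1 \<noteq> 0 \<or> det4 p1 p2 z t2 \<noteq> 0 \<or> det4 p1 p2 z t3 \<noteq> 0"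
proof (rule ccontr)
  assume H: "\<not> ?thesis"
  from C have CT: "a \<in> T" "t1 \<in> T" "t2 \<in> T" "t3 \<in> T" and D: "det4 a t1 t2 t3 \<noteq> 0"
    and t: "a$c = 1" "t1$c = 0" "t2$c = 0" "t3$c = 0" unfolding ctx_def by auto
  have D0: "det4 p1 t1 t2 t3 \<noteq> 0" by (rule apx_ne[OF D, where m=c]) (use t c in auto)
  have A: "det4 p1 p2 z w = 0" for w
    by (rule ext_det[OF D0]) (use H det4_rep14[of p1 p2 z] in auto)
  let ?d = "p2 - p1"
  have B: "m2 ?d z m n = 0" if dd: "distinct [k,c,m,n]" for k m n
  proof -
    have "det4 p1 ?d z (ax k) = p1$c * det4 (ax c) ?d z (ax k)"
      by (rule det4_apx) (use c dd in \<open>auto simp: ax_def\<close>)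
    moreover have "det4 (ax k) (ax c) ?d z = - det4 (ax c) ?d z (ax k)" by (rule det4_rot)
    ultimately have "det4 (ax k) (ax c) ?d z = 0" using A[of "ax k"] det4_rowop1[of p1 p2 z "ax k"] c by simp
    then show ?thesis using det4_axax2[OF dd, of ?d z] by auto
  qed
  obtain k1 k2 k3 where dk: "distinct [c,k1,k2,k3]" using dist1_ex by blast
  have b1: "m2 ?d z k2 k3 = 0" by (rule B[of k1]) (use dk in auto)
  have b2: "m2 ?d z k1 k3 = 0" by (rule B[of k2]) (use dk in auto)
  have b3: "m2 ?d z k1 k2 = 0" by (rule B[of k3]) (use dk in auto)
  have h1: "al$c*p1$c + al$k1*p1$k1 + al$k2*p1$k2 + al$k3*p1$k3 = b" by (rule hyp4[OF T(1) dk])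
  have h2: "al$c*p2$c + al$k1*p2$k1 + al$k2*p2$k2 + al$k3*p2$k3 = b" by (rule hyp4[OF T(2) dk])
  have h3: "al$c*z$c + al$k1*z$k1 + al$k2*z$k2 + al$k3*z$k3 = b" by (rule hyp4[OF T(3) dk])
  have P: "real_of_int (?d$k1) = 0 \<and> real_of_int (?d$k2) = 0 \<and> real_of_int (?d$k3) = 0"
  proof (rule par3[where aa="al$k1" and ab="al$k2" and ac="al$k3" and za="real_of_int (z$k1)" and zb="real_of_int (z$k2)" and zc="real_of_int (z$k3)" and bb=b])
    show "real_of_int (?d$k1) * real_of_int (z$k2) = real_of_int (?d$k2) * real_of_int (z$k1)"
      using b3 unfolding m2_def by (metis eq_iff_diff_eq_0 of_int_mult)
    show "real_of_int (?d$k1) * real_of_int (z$k3) = real_of_int (?d$k3) * real_of_int (z$k1)"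
      using b2 unfolding m2_def by (metis eq_iff_diff_eq_0 of_int_mult)
    show "real_of_int (?d$k2) * real_of_int (z$k3) = real_of_int (?d$k3) * real_of_int (z$k2)"
      using b1 unfolding m2_def by (metis eq_iff_diff_eq_0 of_int_mult)
    show "al$k1 * real_of_int (?d$k1) + al$k2 * real_of_int (?d$k2) + al$k3 * real_of_int (?d$k3) = 0"
      using h1 h2 c by (simp add: algebra_simps)
    show "al$k1 * real_of_int (z$k1) + al$k2 * real_of_int (z$k2) + al$k3 * real_of_int (z$k3) = b"
      using h3 c by simp
    show "b \<noteq> 0" using bpos by simp
  qed
  have "?d$i = 0" for i using cover4[OF dk, of i] P c by auto
  then have "p2 = p1" by (simp add: vec_eq_iff)
  then show False using ne by simp
qed

lemma W2u:
  assumes C: "ctx c a t1 t2 t3" and T: "p1 \<in> T" "p2 \<in> T" "z \<in> T"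
    and c: "p1$c = 1" "p2$c = 1" "z$c = 0" and ne: "p1 \<noteq> p2"
  shows "\<exists>z'. z' \<in> T \<and> z'$c = 0 \<and> z' \<noteq> z \<and> (\<exists>m. m \<noteq> c \<and>
     ((p1$m = 1 \<and> p2$m = 0 \<and> z$m = 0 \<and> z'$m = 0) \<or> (p1$m = 0 \<and> p2$m = 1 \<and> z$m = 0 \<and> z'$m = 0) \<or>
      (p1$m = 0 \<and> p2$m = 0 \<and> z$m = 1 \<and> z'$m = 0) \<or> (p1$m = 0 \<and> p2$m = 0 \<and> z$m = 0 \<and> z'$m = 1)))"
proof -
  from C have CT: "t1 \<in> T" "t2 \<in> T" "t3 \<in> T" and t: "t1$c = 0" "t2$c = 0" "t3$c = 0"
    unfolding ctx_def by auto
  obtain t where tt: "t \<in> T" "t$c = 0" and D: "det4 p1 p2 z t \<noteq> 0"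
    using W2[OF assms] CT t by blast
  have tz: "t \<noteq> z" using D det4_rep34[of p1 p2 z] by auto
  from basis[OF T tt(1) D] obtain m where
    m: "(p1$m = 1 \<and> p2$m = 0 \<and> z$m = 0 \<and> t$m = 0) \<or> (p1$m = 0 \<and> p2$m = 1 \<and> z$m = 0 \<and> t$m = 0)
     \<or> (p1$m = 0 \<and> p2$m = 0 \<and> z$m = 1 \<and> t$m = 0) \<or> (p1$m = 0 \<and> p2$m = 0 \<and> z$m = 0 \<and> t$m = 1)"
    unfolding unit4_def by blast
  have "m \<noteq> c" using m c by auto
  then show ?thesis using tt tz m by blast
qed

lemma W3u:
  assumes T: "x \<in> T" "y \<in> T" "w \<in> T" "z \<in> T"
    and c: "x$c = 1" "y$c = 1" "w$c = 1" "z$c = 0" and nc: "NC x y w"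
  shows "\<exists>m. m \<noteq> c \<and> z$m = 0 \<and> ((x$m = 1 \<and> y$m = 0 \<and> w$m = 0) \<or> (x$m = 0 \<and> y$m = 1 \<and> w$m = 0) \<or> (x$m = 0 \<and> y$m = 0 \<and> w$m = 1))"
proof -
  have D: "det4 x y w z \<noteq> 0" by (rule W3[OF assms])
  from basis[OF T D] obtain m where
    m: "(x$m = 1 \<and> y$m = 0 \<and> w$m = 0 \<and> z$m = 0) \<or> (x$m = 0 \<and> y$m = 1 \<and> w$m = 0 \<and> z$m = 0)
     \<or> (x$m = 0 \<and> y$m = 0 \<and> w$m = 1 \<and> z$m = 0) \<or> (x$m = 0 \<and> y$m = 0 \<and> w$m = 0 \<and> z$m = 1)"
    unfolding unit4_def by blast
  have mc: "m \<noteq> c" using m c by auto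
  have "\<not> (x$m = 0 \<and> y$m = 0 \<and> w$m = 0 \<and> z$m = 1)"
  proof
    assume h: "x$m = 0 \<and> y$m = 0 \<and> w$m = 0 \<and> z$m = 1"
    have "det4 (ax m) x y w = 0" by (rule COL[OF T(1-3), of c m 0]) (use mc c h in auto)
    moreover have "det4 z x y w = z$m * det4 (ax m) x y w" by (rule det4_apx) (use h in auto)
    ultimately have "det4 z x y w = 0" by simp
    then show False using D det4_rot[of z x y w] by simp
  qed
  then show ?thesis using m mc by blast
qed

lemma NC_sym12: assumes "NC p q r" shows "NC q p r"
proof -
  obtain k where "det4 (ax k) p q r \<noteq> 0" using assms unfolding NC_def by blast
  then have "det4 (ax k) q p r \<noteq> 0" using det4_swap23[of "ax k" q p r] by simp
  then show ?thesis unfolding NC_def by blast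
qed
lemma NC_sym23: assumes "NC p q r" shows "NC p r q"
proof -
  obtain k where "det4 (ax k) p q r \<noteq> 0" using assms unfolding NC_def by blast
  then have "det4 (ax k) p r q \<noteq> 0" using det4_swap34[of "ax k" p r q] by simp
  then show ?thesis unfolding NC_def by blast
qed
lemma NC_distinct: assumes "NC p q r" shows "p \<noteq> q \<and> p \<noteq> r \<and> q \<noteq> r"
proof -
  obtain k where "det4 (ax k) p q r \<noteq> 0" using assms unfolding NC_def by blast
  then show ?thesis using det4_rep23[of "ax k" p r] det4_rep24[of "ax k" p q] det4_rep34[of "ax k" p q] by auto
qed

lemma le4: fixes P Q :: "int^4" assumes "distinct [c,j,k,l]" "P$c \<le> Q$c" "P$j \<le> Q$j" "P$k \<le> Q$k" "P$l \<le> Q$l"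
  shows "P$n \<le> Q$n"
  using cover4[OF assms(1), of n] assms(2-5) by auto

definition Dp :: "int^4 \<Rightarrow> int^4 \<Rightarrow> 4 \<Rightarrow> 4 \<Rightarrow> bool" where
  "Dp P Q c j \<longleftrightarrow> (\<exists>m. m \<noteq> c \<and> m \<noteq> j \<and> ((P$m = 0 \<and> Q$m = 1) \<or> (P$m = 1 \<and> Q$m = 0)))"

lemma LINE3:
  assumes T: "x \<in> T" "y \<in> T" "w \<in> T" and ne: "x \<noteq> y" "x \<noteq> w" "y \<noteq> w" and cj: "c \<noteq> j"
    and ag: "y$c = x$c" "w$c = x$c" "y$j = x$j" "w$j = x$j"
    and D: "Dp x y c j" "Dp x w c j" "Dp y w c j"
  shows False
proof -
  obtain k l where d: "distinct [c,j,k,l]" using dist2_ex[OF cj] by blast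
  have dk: "distinct [c,j,k]" "distinct [c,j,l]" using d by auto
  have Z: "\<not>(P$n = 0 \<and> Q$n = 0)" if "P \<in> T" "Q \<in> T" "P \<noteq> Q" "P$c = Q$c" "P$j = Q$j" "distinct [c,j,n]" for P Q n
    using heq3[OF that(1,2) that(6)] that(3-5) by auto
  have A: "\<not>(P$k \<le> Q$k \<and> P$l \<le> Q$l)" if "P \<in> T" "Q \<in> T" "P \<noteq> Q" "P$c = Q$c" "P$j = Q$j" for P Q
  proof
    assume h: "P$k \<le> Q$k \<and> P$l \<le> Q$l"
    have "\<And>n. P$n \<le> Q$n" by (rule le4[OF d]) (use h that in auto)
    then show False using antichain[OF that(1,2)] that(3) by blast
  qed
  have DD: "(P$k = 0 \<and> Q$k = 1) \<or> (P$k = 1 \<and> Q$k = 0) \<or> (P$l = 0 \<and> Q$l = 1) \<or> (P$l = 1 \<and> Q$l = 0)"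
    if h: "Dp P Q c j" for P Q
  proof -
    obtain m where m: "m \<noteq> c" "m \<noteq> j" "(P$m = 0 \<and> Q$m = 1) \<or> (P$m = 1 \<and> Q$m = 0)"
      using h unfolding Dp_def by blast
    have "m = k \<or> m = l" using cover4[OF d, of m] m by auto
    then show ?thesis using m(3) by auto
  qed
  show False
  proof (rule line3_core[of "x$k" "x$l" "y$k" "y$l" "w$k" "w$l"])
    show "0 \<le> x$k" "0 \<le> x$l" "0 \<le> y$k" "0 \<le> y$l" "0 \<le> w$k" "0 \<le> w$l" using nonneg T by auto
    show "\<not>(x$k = 0 \<and> y$k = 0)" by (rule Z) (use T ne ag dk in auto)
    show "\<not>(x$k = 0 \<and> w$k = 0)" by (rule Z) (use T ne ag dk in auto)
    show "\<not>(y$k = 0 \<and> w$k = 0)" by (rule Z) (use T ne ag dk in auto)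
    show "\<not>(x$l = 0 \<and> y$l = 0)" by (rule Z) (use T ne ag dk in auto)
    show "\<not>(x$l = 0 \<and> w$l = 0)" by (rule Z) (use T ne ag dk in auto)
    show "\<not>(y$l = 0 \<and> w$l = 0)" by (rule Z) (use T ne ag dk in auto)
    show "\<not>(x$k \<le> y$k \<and> x$l \<le> y$l)" by (rule A) (use T ne ag in auto)
    show "\<not>(y$k \<le> x$k \<and> y$l \<le> x$l)" by (rule A) (use T ne ag in auto)
    show "\<not>(x$k \<le> w$k \<and> x$l \<le> w$l)" by (rule A) (use T ne ag in auto)
    show "\<not>(w$k \<le> x$k \<and> w$l \<le> x$l)" by (rule A) (use T ne ag in auto)
    show "\<not>(y$k \<le> w$k \<and> y$l \<le> w$l)" by (rule A) (use T ne ag in auto)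
    show "\<not>(w$k \<le> y$k \<and> w$l \<le> y$l)" by (rule A) (use T ne ag in auto)
    show "(x$k = 0 \<and> y$k = 1) \<or> (x$k = 1 \<and> y$k = 0) \<or> (x$l = 0 \<and> y$l = 1) \<or> (x$l = 1 \<and> y$l = 0)" by (rule DD[OF D(1)])
    show "(x$k = 0 \<and> w$k = 1) \<or> (x$k = 1 \<and> w$k = 0) \<or> (x$l = 0 \<and> w$l = 1) \<or> (x$l = 1 \<and> w$l = 0)" by (rule DD[OF D(2)])
    show "(y$k = 0 \<and> w$k = 1) \<or> (y$k = 1 \<and> w$k = 0) \<or> (y$l = 0 \<and> w$l = 1) \<or> (y$l = 1 \<and> w$l = 0)" by (rule DD[OF D(3)])
  qed
qed

lemma W2D:
  assumes C: "ctx c a t1 t2 t3" and T: "P \<in> T" "Q \<in> T" "z \<in> T"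
    and c: "P$c = 1" "Q$c = 1" "z$c = 0" and ne: "P \<noteq> Q" and cj: "j \<noteq> c" and ag: "P$j = Q$j"
    and side: "P$j = 0 \<Longrightarrow> z$j \<noteq> 0 \<and> z$j \<noteq> 1"
  shows "Dp P Q c j"
proof -
  obtain z' m where z': "z' \<in> T" "z'$c = 0" "z' \<noteq> z" and mc: "m \<noteq> c" and
    m: "(P$m = 1 \<and> Q$m = 0 \<and> z$m = 0 \<and> z'$m = 0) \<or> (P$m = 0 \<and> Q$m = 1 \<and> z$m = 0 \<and> z'$m = 0) \<or>
      (P$m = 0 \<and> Q$m = 0 \<and> z$m = 1 \<and> z'$m = 0) \<or> (P$m = 0 \<and> Q$m = 0 \<and> z$m = 0 \<and> z'$m = 1)"
    using W2u[OF C T c ne] by blast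
  show ?thesis
  proof (cases "P$m = 0 \<and> Q$m = 0")
    case True
    have mj: "m \<noteq> j"
    proof assume "m = j" then show False using True side m by auto qed
    have "P = Q" by (rule heq3[OF T(1,2), of c j m]) (use cj mj mc c ag True in auto)
    then show ?thesis using ne by simp
  next
    case False
    then have h: "(P$m = 1 \<and> Q$m = 0) \<or> (P$m = 0 \<and> Q$m = 1)" using m by auto
    then have "m \<noteq> j" using ag by auto
    then show ?thesis unfolding Dp_def using mc h by blast
  qed
qed

lemma W3D:
  assumes T: "P \<in> T" "Q \<in> T" "R \<in> T" "z \<in> T"
    and c: "P$c = 1" "Q$c = 1" "R$c = 1" "z$c = 0" and ne: "P \<noteq> Q" and cj: "j \<noteq> c"
    and j: "P$j = 0" "Q$j = 0" "R$j \<noteq> 0" "z$j \<noteq> 0"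
  shows "Dp P Q c j"
proof -
  have nc: "NC P Q R" by (rule NCg[OF T(1-3), of c j]) (use cj c j ne in auto)
  obtain m where m: "m \<noteq> c" "z$m = 0" "(P$m = 1 \<and> Q$m = 0 \<and> R$m = 0) \<or> (P$m = 0 \<and> Q$m = 1 \<and> R$m = 0) \<or> (P$m = 0 \<and> Q$m = 0 \<and> R$m = 1)"
    using W3u[OF T c nc] by blast
  have mj: "m \<noteq> j" using m(2) j(4) by auto
  show ?thesis
  proof (cases "P$m = 0 \<and> Q$m = 0")
    case True
    have "P = Q" by (rule heq3[OF T(1,2), of c j m]) (use cj mj m c j True in auto)
    then show ?thesis using ne by simp
  next
    case False
    then show ?thesis unfolding Dp_def using m mj by auto
  qed
qed

abbreviation GOAL :: bool where
  "GOAL \<equiv> B1_facet T \<or> B2_facet T \<or> flat_border T \<or> T = std_cross_polytope"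

lemma mkB1: assumes "a \<in> T" "a$c = 1" "\<And>x. x \<in> T \<Longrightarrow> x$c \<noteq> 0 \<Longrightarrow> x = a" shows GOAL
proof -
  have e: "{x\<in>T. x$c \<noteq> 0} = {a}"
  proof
    show "{x\<in>T. x$c \<noteq> 0} \<subseteq> {a}" using assms(3) by blast
    show "{a} \<subseteq> {x\<in>T. x$c \<noteq> 0}" using assms(1,2) by simp
  qed
  have "card {x\<in>T. x$c \<noteq> 0} = 1" unfolding e by simp
  moreover have "\<forall>x\<in>T. x$c \<noteq> 0 \<longrightarrow> x$c = 1" using assms by metis
  ultimately have "B1_facet T" unfolding B1_facet_def by blast
  then show ?thesis by blast
qed

lemma mkB2: assumes "j \<noteq> c" "\<And>x. x \<in> T \<Longrightarrow> (x$c, x$j) \<in> {(0,0),(1,0),(0,1)}" shows GOAL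
proof -
  have "c \<noteq> j \<and> (\<forall>x\<in>T. (x$c, x$j) \<in> {(0,0),(1,0),(0,1)})" using assms by metis
  then have "B2_facet T" unfolding B2_facet_def by blast
  then show ?thesis by blast
qed

lemma mkFB: assumes "c \<noteq> j" "C \<in> T" "C$c = 1" "C$j = 1" "A \<in> T" "B \<in> T" "A \<noteq> B"
   "A$c = 0" "A$j = 0" "B$c = 0" "B$j = 0" "\<And>x. x \<in> T \<Longrightarrow> x \<noteq> C \<Longrightarrow> x$c = 0 \<or> x$j = 0"
  shows GOAL
proof -
  have e1: "\<exists>A B. A \<in> T \<and> B \<in> T \<and> A \<noteq> B \<and> A $ c = 0 \<and> A $ j = 0 \<and> B $ c = 0 \<and> B $ j = 0"
    using assms(5-11) by blast
  have e2: "\<forall>x\<in>T. x \<noteq> C \<longrightarrow> x $ c = 0 \<or> x $ j = 0" using assms(12) by blast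
  have "flat_border T" unfolding flat_border_def
    using assms(1-4) e1 e2 by blast
  then show ?thesis by blast
qed

definition col01O :: "4 \<Rightarrow> 4 \<Rightarrow> bool" where
  "col01O c j \<longleftrightarrow> (\<forall>x\<in>T. x$c = 1 \<longrightarrow> x$j = 0 \<or> x$j = 1)"

definition Zo :: "4 \<Rightarrow> 4 \<Rightarrow> bool" where
  "Zo c j \<longleftrightarrow> j \<noteq> c \<and> col01O c j \<and> (\<exists>a1 a2. a1 \<in> T \<and> a2 \<in> T \<and> a1$c = 1 \<and> a2$c = 1 \<and> a1 \<noteq> a2 \<and> a1$j = 0 \<and> a2$j = 0)"

lemma not01O: assumes "\<not> col01O c j" obtains q where "q \<in> T" "q$c = 1" "q$j \<ge> 2"
  using assms int2 unfolding col01O_def by blast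

lemma Z01o_2:
  assumes z: "z \<in> T" "z$c = 0" and d: "distinct [c,i,j]" and T: "q \<in> T" "s1 \<in> T"
    and c: "q$c = 1" "s1$c = 1" and q: "q$i \<ge> 2" "q$j = 0" and s: "s1$i = 0" "s1$j = 0"
  shows "\<exists>j'. Zo c j'"
proof (cases "col01O c j")
  case True
  have "q \<noteq> s1" using q s by auto
  then have "Zo c j" unfolding Zo_def using True d T c q s by auto
  then show ?thesis by blast
next
  case False
  then obtain r where r: "r \<in> T" "r$c = 1" "r$j \<ge> 2" by (rule not01O)
  have qs: "q \<noteq> s1" using q s by auto
  have nc: "NC q s1 r" by (rule NCg[OF T r(1), of c j]) (use d c q s r qs in auto)
  obtain l where l: "l \<noteq> c" "z$l = 0"
    "(q$l = 1 \<and> s1$l = 0 \<and> r$l = 0) \<or> (q$l = 0 \<and> s1$l = 1 \<and> r$l = 0) \<or> (q$l = 0 \<and> s1$l = 0 \<and> r$l = 1)"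
    using W3u[OF T r(1) z(1) c r(2) z(2) nc] by blast
  show ?thesis
  proof -
    { assume h: "q$l = 1 \<and> s1$l = 0 \<and> r$l = 0"
      have li: "l \<noteq> i" using h q by auto
      have lj: "l \<noteq> j" using h q by auto
      have dd: "distinct [c,i,j,l]" using d l li lj by auto
      have "\<And>n. s1$n \<le> q$n" by (rule le4[OF dd]) (use c s h q nonneg[OF T(1)] in auto)
      then have False using antichain[OF T(2) T(1)] qs by metis }
    moreover
    { assume h: "q$l = 0 \<and> s1$l = 0 \<and> r$l = 1"
      have li: "l \<noteq> i" using h q by auto
      have lj: "l \<noteq> j" using h r by auto
      have "q = s1" by (rule heq3[OF T, of c j l]) (use d l li lj c q s h in auto)
      then have False using qs by simp }
    moreover
    { assume h: "q$l = 0 \<and> s1$l = 1 \<and> r$l = 0"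
      have li: "l \<noteq> i" using h s by auto
      have lj: "l \<noteq> j" using h s by auto
      have dd: "distinct [c,i,j,l]" using d l li lj by auto
      have "col01O c l" unfolding col01O_def
      proof (intro ballI impI)
        fix x assume x: "x \<in> T" "x$c = 1"
        show "x$l = 0 \<or> x$l = 1"
        proof (rule ccontr)
          assume "\<not> ?thesis"
          then have xl: "x$l \<ge> 2" using int2[OF x(1)] by auto
          have "\<And>n. s1$n \<le> x$n" by (rule le4[OF dd]) (use c s h x xl nonneg[OF x(1)] in auto)
          then have "s1 = x" using antichain[OF T(2) x(1)] by metis
          then show False using h xl by simp
        qed
      qed
      moreover have "q \<noteq> r" using q r by auto
      ultimately have "Zo c l" unfolding Zo_def using l T r c h by blast
      then have ?thesis by blast }
    ultimately show ?thesis using l(3) by blast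
  qed
qed

lemma Z01o_1:
  assumes z: "z \<in> T" "z$c = 0" and ic: "i \<noteq> c" and T: "s1 \<in> T" "s2 \<in> T"
    and c: "s1$c = 1" "s2$c = 1" and ne: "s1 \<noteq> s2" and s: "s1$i = 0" "s2$i = 0"
  shows "\<exists>j. Zo c j"
proof (cases "col01O c i")
  case True
  then have "Zo c i" unfolding Zo_def using ic T c ne s by blast
  then show ?thesis by blast
next
  case False
  then obtain q where q: "q \<in> T" "q$c = 1" "q$i \<ge> 2" by (rule not01O)
  have nc: "NC s1 s2 q" by (rule NCg[OF T q(1), of c i]) (use ic c s q ne in auto)
  obtain j where j: "j \<noteq> c" "z$j = 0"
    "(s1$j = 1 \<and> s2$j = 0 \<and> q$j = 0) \<or> (s1$j = 0 \<and> s2$j = 1 \<and> q$j = 0) \<or> (s1$j = 0 \<and> s2$j = 0 \<and> q$j = 1)"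
    using W3u[OF T q(1) z(1) c q(2) z(2) nc] by blast
  show ?thesis
  proof -
    { assume h: "s1$j = 1 \<and> s2$j = 0 \<and> q$j = 0"
      have ji: "j \<noteq> i" using h s by auto
      have ?thesis by (rule Z01o_2[OF z, of i j q s2]) (use ic ji j q T c s h in auto) }
    moreover
    { assume h: "s1$j = 0 \<and> s2$j = 1 \<and> q$j = 0"
      have ji: "j \<noteq> i" using h s by auto
      have ?thesis by (rule Z01o_2[OF z, of i j q s1]) (use ic ji j q T c s h in auto) }
    moreover
    { assume h: "s1$j = 0 \<and> s2$j = 0 \<and> q$j = 1"
      have ji: "j \<noteq> i" using h q by auto
      have "s1 = s2" by (rule heq3[OF T, of c i j]) (use ic ji j c s h in auto)
      then have False using ne by simp }
    ultimately show ?thesis using j(3) by blast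
  qed
qed

lemma Z01o:
  assumes z: "z \<in> T" "z$c = 0" and T: "s1 \<in> T" "s2 \<in> T" "s3 \<in> T"
    and c: "s1$c = 1" "s2$c = 1" "s3$c = 1" and nc: "NC s1 s2 s3"
  shows "\<exists>j. Zo c j"
proof -
  have ne: "s1 \<noteq> s2" "s1 \<noteq> s3" "s2 \<noteq> s3" using NC_distinct[OF nc] by auto
  obtain i where i: "i \<noteq> c" "z$i = 0"
    "(s1$i = 1 \<and> s2$i = 0 \<and> s3$i = 0) \<or> (s1$i = 0 \<and> s2$i = 1 \<and> s3$i = 0) \<or> (s1$i = 0 \<and> s2$i = 0 \<and> s3$i = 1)"
    using W3u[OF T z(1) c z(2) nc] by blast
  show ?thesis
  proof -
    { assume h: "s1$i = 1 \<and> s2$i = 0 \<and> s3$i = 0"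
      have ?thesis by (rule Z01o_1[OF z i(1) T(2) T(3)]) (use c ne h in auto) }
    moreover
    { assume h: "s1$i = 0 \<and> s2$i = 1 \<and> s3$i = 0"
      have ?thesis by (rule Z01o_1[OF z i(1) T(1) T(3)]) (use c ne h in auto) }
    moreover
    { assume h: "s1$i = 0 \<and> s2$i = 0 \<and> s3$i = 1"
      have ?thesis by (rule Z01o_1[OF z i(1) T(1) T(2)]) (use c ne h in auto) }
    ultimately show ?thesis using i(3) by blast
  qed
qed

lemma S1:
  assumes C: "ctx c a t1 t2 t3" and c01: "col01 c" and jc: "j \<noteq> c"
    and T: "x1 \<in> T" "x2 \<in> T" "x3 \<in> T" and c: "x1$c = 1" "x2$c = 1" "x3$c = 1"
    and ne: "x1 \<noteq> x2" "x1 \<noteq> x3" "x2 \<noteq> x3" and Oj: "\<And>x. x \<in> T \<Longrightarrow> x$c = 1 \<Longrightarrow> x$j = 0"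
  shows GOAL
proof (cases "\<forall>z\<in>T. z$c = 0 \<longrightarrow> z$j = 0 \<or> z$j = 1")
  case True
  show ?thesis
  proof (rule mkB2[OF jc])
    fix x assume x: "x \<in> T"
    have "x$c = 0 \<or> x$c = 1" using c01 x unfolding col01_def by blast
    then show "(x$c, x$j) \<in> {(0,0),(1,0),(0,1)}" using True Oj x by auto
  qed
next
  case False
  then obtain z where z: "z \<in> T" "z$c = 0" "z$j \<noteq> 0" "z$j \<noteq> 1" by blast
  have j0: "x1$j = 0" "x2$j = 0" "x3$j = 0" using Oj T c by auto
  have D1: "Dp x1 x2 c j" by (rule W2D[OF C T(1) T(2) z(1) c(1) c(2) z(2) ne(1) jc]) (use j0 z in auto)
  have D2: "Dp x1 x3 c j" by (rule W2D[OF C T(1) T(3) z(1) c(1) c(3) z(2) ne(2) jc]) (use j0 z in auto)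
  have D3: "Dp x2 x3 c j" by (rule W2D[OF C T(2) T(3) z(1) c(2) c(3) z(2) ne(3) jc]) (use j0 z in auto)
  show ?thesis using LINE3[OF T ne, of c j] jc c j0 D1 D2 D3 by auto
qed

lemma ctx_tj:
  assumes C: "ctx c a t1 t2 t3" and jc: "j \<noteq> c"
  obtains t where "t \<in> T" "t$c = 0" "t$j \<noteq> 0" "t \<in> {t1,t2,t3}"
proof -
  from C have CT: "t1 \<in> T" "t2 \<in> T" "t3 \<in> T" and D: "det4 a t1 t2 t3 \<noteq> 0"
    and t: "t1$c = 0" "t2$c = 0" "t3$c = 0" unfolding ctx_def by auto
  have "\<not> (t1$j = 0 \<and> t2$j = 0 \<and> t3$j = 0)"
  proof
    assume h: "t1$j = 0 \<and> t2$j = 0 \<and> t3$j = 0"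
    have "det4 a t1 t2 t3 = 0" by (rule det4_z2[of c j]) (use jc t h in auto)
    then show False using D by simp
  qed
  then show ?thesis using that CT t by blast
qed

lemma B2core:
  assumes d: "distinct [c,j,k,l]" and t: "t \<in> T" "t$c = 0" "t$j \<noteq> 0"
    and A: "a1 \<in> T" "a2 \<in> T" "a1$c = 1" "a2$c = 1" "a1 \<noteq> a2" "a1$j = 0" "a2$j = 0"
    and U: "u \<in> T" "v \<in> T" "u$c = 1" "v$c = 1" "u \<noteq> v" "u$j = 1" "v$j = 1" "u$k = 0" "v$k = 1"
  shows False
proof -
  have ul: "u$l \<noteq> 0"
  proof
    assume h: "u$l = 0"
    have "\<And>n. u$n \<le> v$n" by (rule le4[OF d]) (use U h nonneg[OF U(2)] in auto)
    then show False using antichain[OF U(1) U(2)] U(5) by metis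
  qed
  have jc: "j \<noteq> c" using d by auto
  have nu: "NC a1 a2 u" by (rule NCg[OF A(1) A(2) U(1), of c j]) (use jc A U in auto)
  obtain m where m: "m \<noteq> c" "t$m = 0"
    "(a1$m = 1 \<and> a2$m = 0 \<and> u$m = 0) \<or> (a1$m = 0 \<and> a2$m = 1 \<and> u$m = 0) \<or> (a1$m = 0 \<and> a2$m = 0 \<and> u$m = 1)"
    using W3u[OF A(1) A(2) U(1) t(1) A(3) A(4) U(3) t(2) nu] by blast
  have mj: "m \<noteq> j" using m t by auto
  have m3: "\<not> (a1$m = 0 \<and> a2$m = 0)"
  proof
    assume "a1$m = 0 \<and> a2$m = 0"
    then have "a1 = a2" using heq3[OF A(1) A(2), of c j m] jc mj m A by auto
    then show False using A by simp
  qed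
  have mk: "m = k" using m m3 ul cover4[OF d, of m] mj by auto
  have ak: "(a1$k = 1 \<and> a2$k = 0) \<or> (a1$k = 0 \<and> a2$k = 1)" using m m3 mk by auto
  have nv: "NC a1 a2 v" by (rule NCg[OF A(1) A(2) U(2), of c j]) (use jc A U in auto)
  obtain m' where m': "m' \<noteq> c" "t$m' = 0"
    "(a1$m' = 1 \<and> a2$m' = 0 \<and> v$m' = 0) \<or> (a1$m' = 0 \<and> a2$m' = 1 \<and> v$m' = 0) \<or> (a1$m' = 0 \<and> a2$m' = 0 \<and> v$m' = 1)"
    using W3u[OF A(1) A(2) U(2) t(1) A(3) A(4) U(4) t(2) nv] by blast
  have mj': "m' \<noteq> j" using m' t by auto
  have m3': "\<not> (a1$m' = 0 \<and> a2$m' = 0)"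
  proof
    assume "a1$m' = 0 \<and> a2$m' = 0"
    then have "a1 = a2" using heq3[OF A(1) A(2), of c j m'] jc mj' m' A by auto
    then show False using A by simp
  qed
  have mk': "m' = l" using m' m3' U cover4[OF d, of m'] mj' by auto
  have al: "(a1$l = 1 \<and> a2$l = 0) \<or> (a1$l = 0 \<and> a2$l = 1)" and vl: "v$l = 0" using m' m3' mk' by auto
  show False
  proof -
    { fix P Q assume PQ: "P \<in> T" "Q \<in> T" "P$c = 1" "Q$c = 1" "P \<noteq> Q" "P$j = 0" "Q$j = 0"
        "P$k = 1" "Q$k = 0" "(P$l = 1 \<and> Q$l = 0) \<or> (P$l = 0 \<and> Q$l = 1)"
      have False
      proof (cases "Q$l = 0")
        case True
        have "\<And>n. Q$n \<le> P$n" by (rule le4[OF d]) (use PQ True nonneg[OF PQ(1)] in auto)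
        then show False using antichain[OF PQ(2) PQ(1)] PQ(5) by metis
      next
        case False
        then have Pl: "P$l = 0" using PQ(10) by auto
        have "\<And>n. P$n \<le> v$n" by (rule le4[OF d]) (use PQ Pl U vl in auto)
        then have "P = v" using antichain[OF PQ(1) U(2)] by metis
        then show False using PQ U by simp
      qed }
    note X = this
    show False
    proof (cases "a1$k = 1")
      case True
      then show False using X[OF A(1) A(2) A(3) A(4) A(5) A(6) A(7)] ak al by auto
    next
      case False
      then show False using X[OF A(2) A(1) A(4) A(3) A(5)[symmetric] A(7) A(6)] ak al by auto
    qed
  qed
qed

lemma B2case:
  assumes C: "ctx c a t1 t2 t3" and jc: "j \<noteq> c"
    and A: "a1 \<in> T" "a2 \<in> T" "a1$c = 1" "a2$c = 1" "a1 \<noteq> a2" "a1$j = 0" "a2$j = 0"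
    and U: "u \<in> T" "v \<in> T" "u$c = 1" "v$c = 1" "u \<noteq> v" "u$j = 1" "v$j = 1"
  shows False
proof -
  obtain t where t: "t \<in> T" "t$c = 0" "t$j \<noteq> 0" using ctx_tj[OF C jc] by blast
  from C have t1: "t1 \<in> T" "t1$c = 0" unfolding ctx_def by auto
  have D: "Dp u v c j" by (rule W2D[OF C U(1) U(2) t1(1) U(3) U(4) t1(2) U(5) jc]) (use U in auto)
  obtain k l where d: "distinct [c,j,k,l]" using dist2_ex[of c j] jc by metis
  obtain m where m: "m \<noteq> c" "m \<noteq> j" "(u$m = 0 \<and> v$m = 1) \<or> (u$m = 1 \<and> v$m = 0)"
    using D unfolding Dp_def by blast
  have dl: "distinct [c,j,l,k]" using d by auto
  have mkl: "m = k \<or> m = l" using cover4[OF d, of m] m by auto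
  show False
  proof -
    { assume h: "m = k" "u$m = 0 \<and> v$m = 1"
      have False by (rule B2core[OF d t A U]) (use h in auto) }
    moreover
    { assume h: "m = k" "u$m = 1 \<and> v$m = 0"
      have False by (rule B2core[OF d t A U(2) U(1) U(4) U(3) U(5)[symmetric] U(7) U(6)]) (use h in auto) }
    moreover
    { assume h: "m = l" "u$m = 0 \<and> v$m = 1"
      have False by (rule B2core[OF dl t A U]) (use h in auto) }
    moreover
    { assume h: "m = l" "u$m = 1 \<and> v$m = 0"
      have False by (rule B2core[OF dl t A U(2) U(1) U(4) U(3) U(5)[symmetric] U(7) U(6)]) (use h in auto) }
    ultimately show False using mkl m(3) by blast
  qed
qed

lemma two_O_common:
  assumes C: "ctx c a t1 t2 t3" and c01: "col01 c" and o: "o' \<in> T" "o'$c = 1" "o' \<noteq> a"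
    and only: "\<And>x. x \<in> T \<Longrightarrow> x$c = 1 \<Longrightarrow> x = a \<or> x = o'"
    and mc: "m \<noteq> c" and z0: "a$m = 0" "o'$m = 0"
  shows GOAL
proof -
  from C have aT: "a \<in> T" "a$c = 1" unfolding ctx_def by auto
  show ?thesis
  proof (cases "\<forall>z\<in>T. z$c = 0 \<longrightarrow> z$m = 0 \<or> z$m = 1")
    case True
    show ?thesis
    proof (rule mkB2[OF mc])
      fix x assume x: "x \<in> T"
      have "x$c = 0 \<or> x$c = 1" using c01 x unfolding col01_def by blast
      moreover have "x$c = 1 \<Longrightarrow> x$m = 0" using only[OF x] z0 by auto
      ultimately show "(x$c, x$m) \<in> {(0,0),(1,0),(0,1)}" using True x by auto
    qed
  next
    case False
    then obtain z where z: "z \<in> T" "z$c = 0" "z$m \<noteq> 0" "z$m \<noteq> 1" by blast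
    obtain z' m' where z': "z' \<in> T" "z'$c = 0" "z' \<noteq> z" and mc': "m' \<noteq> c" and
      mm: "(a$m' = 1 \<and> o'$m' = 0 \<and> z$m' = 0 \<and> z'$m' = 0) \<or> (a$m' = 0 \<and> o'$m' = 1 \<and> z$m' = 0 \<and> z'$m' = 0) \<or>
      (a$m' = 0 \<and> o'$m' = 0 \<and> z$m' = 1 \<and> z'$m' = 0) \<or> (a$m' = 0 \<and> o'$m' = 0 \<and> z$m' = 0 \<and> z'$m' = 1)"
      using W2u[OF C aT(1) o(1) z(1) aT(2) o(2) z(2) o(3)[symmetric]] by blast
    show ?thesis
    proof -
      { assume h: "a$m' = 1 \<and> o'$m' = 0 \<and> z$m' = 0 \<and> z'$m' = 0"
        have ?thesis
        proof (rule mkFB[of c m' a z z'])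
          fix x assume x: "x \<in> T" "x \<noteq> a"
          have "x$c = 0 \<or> x$c = 1" using c01 x unfolding col01_def by blast
          then show "x$c = 0 \<or> x$m' = 0" using only[OF x(1)] x h by auto
        qed (use mc' aT h z z' in auto) }
      moreover
      { assume h: "a$m' = 0 \<and> o'$m' = 1 \<and> z$m' = 0 \<and> z'$m' = 0"
        have ?thesis
        proof (rule mkFB[of c m' o' z z'])
          fix x assume x: "x \<in> T" "x \<noteq> o'"
          have "x$c = 0 \<or> x$c = 1" using c01 x unfolding col01_def by blast
          then show "x$c = 0 \<or> x$m' = 0" using only[OF x(1)] x h by auto
        qed (use mc' o h z z' in auto) }
      moreover
      { assume h: "a$m' = 0 \<and> o'$m' = 0"
        have mm': "m' \<noteq> m" using h mm z by auto
        have "a = o'" by (rule heq3[OF aT(1) o(1), of c m m']) (use mc mc' mm' aT o z0 h in auto)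
        then have False using o by simp }
      ultimately show ?thesis using mm by blast
    qed
  qed
qed

lemma two_O:
  assumes C: "ctx c a t1 t2 t3" and c01: "col01 c" and o: "o' \<in> T" "o'$c = 1" "o' \<noteq> a"
    and only: "\<And>x. x \<in> T \<Longrightarrow> x$c = 1 \<Longrightarrow> x = a \<or> x = o'"
  shows GOAL
proof -
  from C have aT: "a \<in> T" "a$c = 1" and t1: "t1 \<in> T" "t1$c = 0" unfolding ctx_def by auto
  obtain z' m where z': "z' \<in> T" "z'$c = 0" "z' \<noteq> t1" and mc: "m \<noteq> c" and
    mm: "(a$m = 1 \<and> o'$m = 0 \<and> t1$m = 0 \<and> z'$m = 0) \<or> (a$m = 0 \<and> o'$m = 1 \<and> t1$m = 0 \<and> z'$m = 0) \<or>
      (a$m = 0 \<and> o'$m = 0 \<and> t1$m = 1 \<and> z'$m = 0) \<or> (a$m = 0 \<and> o'$m = 0 \<and> t1$m = 0 \<and> z'$m = 1)"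
    using W2u[OF C aT(1) o(1) t1(1) aT(2) o(2) t1(2) o(3)[symmetric]] by blast
  show ?thesis
  proof -
    { assume h: "a$m = 1 \<and> o'$m = 0 \<and> t1$m = 0 \<and> z'$m = 0"
      have ?thesis
      proof (rule mkFB[of c m a t1 z'])
        fix x assume x: "x \<in> T" "x \<noteq> a"
        have "x$c = 0 \<or> x$c = 1" using c01 x unfolding col01_def by blast
        then show "x$c = 0 \<or> x$m = 0" using only[OF x(1)] x h by auto
      qed (use mc aT h t1 z' in auto) }
    moreover
    { assume h: "a$m = 0 \<and> o'$m = 1 \<and> t1$m = 0 \<and> z'$m = 0"
      have ?thesis
      proof (rule mkFB[of c m o' t1 z'])
        fix x assume x: "x \<in> T" "x \<noteq> o'"
        have "x$c = 0 \<or> x$c = 1" using c01 x unfolding col01_def by blast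
        then show "x$c = 0 \<or> x$m = 0" using only[OF x(1)] x h by auto
      qed (use mc o h t1 z' in auto) }
    moreover
    { assume h: "a$m = 0 \<and> o'$m = 0"
      have ?thesis by (rule two_O_common[OF C c01 o only mc]) (use h in auto) }
    ultimately show ?thesis using mm by blast
  qed
qed

lemma det4_uu:
  assumes d: "distinct [c,j,m,l]" and c: "P$c = 1" "Q$c = 1" "Z$c = 0" "W$c = 0"
  shows "det4 P Q Z W = m3 (Q - P) Z W j m l \<or> det4 P Q Z W = - m3 (Q - P) Z W j m l"
proof -
  have "det4 P Q Z W = det4 P (Q - P) Z W" using det4_rowop1[of P Q Z W] by simp
  also have "\<dots> = P$c * det4 (ax c) (Q - P) Z W" by (rule det4_apx) (use c in auto)
  also have "\<dots> = det4 (ax c) (Q - P) Z W" using c by simp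
  finally show ?thesis using det4_axc_m3[OF d, of "Q - P" Z W] by auto
qed

lemma CPcore:
  assumes d: "distinct [c,j,m,l]"
    and U: "uj \<in> T" "um \<in> T" "ul \<in> T"
    and uj: "uj$c = 1" "uj$j = 1" "uj$m = 0" "uj$l = 0"
    and um: "um$c = 1" "um$j = 0" "um$m = 1" "um$l = 0"
    and ul: "ul$c = 1" "ul$j = 0" "ul$m = 0" "ul$l = 1"
    and Z: "zj \<in> T" "zm \<in> T" "zl \<in> T"
    and zj: "zj$c = 0" "zj$j = 0" "zj$m \<noteq> 0" "zj$l \<noteq> 0"
    and zm: "zm$c = 0" "zm$m = 0" "zm$j \<noteq> 0" "zm$l \<noteq> 0"
    and zl: "zl$c = 0" "zl$l = 0" "zl$j \<noteq> 0" "zl$m \<noteq> 0"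
    and onlyT: "\<And>x. x \<in> T \<Longrightarrow> x = uj \<or> x = um \<or> x = ul \<or> x = zj \<or> x = zm \<or> x = zl"
  shows "T = std_cross_polytope"
proof -
  have cov: "\<And>n. n = c \<or> n = j \<or> n = m \<or> n = l" using cover4[OF d] by blast
  have dj: "c \<noteq> j" "c \<noteq> m" "c \<noteq> l" "j \<noteq> m" "j \<noteq> l" "m \<noteq> l" using d by auto
  have hj: "al$c + al$j = b" using hyp4[OF U(1) d] uj by simp
  have hm: "al$c + al$m = b" using hyp4[OF U(2) d] um by simp
  have hl: "al$c + al$l = b" using hyp4[OF U(3) d] ul by simp
  have amj: "al$m = al$j" "al$l = al$j" using hj hm hl by linarith+
  have gp: "al$j > 0" using alpos by simp
  have Zj: "al$j * (zj$m + zj$l) = b" using hyp4[OF Z(1) d] zj amj by (simp add: algebra_simps)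
  have Zm: "al$j * (zm$j + zm$l) = b" using hyp4[OF Z(2) d] zm amj by (simp add: algebra_simps)
  have Zl: "al$j * (zl$j + zl$m) = b" using hyp4[OF Z(3) d] zl amj by (simp add: algebra_simps)
  have s1: "zj$m + zj$l = zm$j + zm$l"
  proof -
    have "real_of_int (zj$m + zj$l) = real_of_int (zm$j + zm$l)" using Zj Zm gp by (metis mult_cancel_left less_irrefl)
    then show ?thesis by linarith
  qed
  have s2: "zj$m + zj$l = zl$j + zl$m"
  proof -
    have "real_of_int (zj$m + zj$l) = real_of_int (zl$j + zl$m)" using Zj Zl gp by (metis mult_cancel_left less_irrefl)
    then show ?thesis by linarith
  qed
  have nn: "zj$m \<ge> 1" "zj$l \<ge> 1" "zm$j \<ge> 1" "zm$l \<ge> 1" "zl$j \<ge> 1" "zl$m \<ge> 1"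
    using nonneg[OF Z(1), of m] nonneg[OF Z(1), of l] nonneg[OF Z(2), of j] nonneg[OF Z(2), of l]
      nonneg[OF Z(3), of j] nonneg[OF Z(3), of m] zj zm zl by linarith+
  have Q1: "det4 uj um zj zm = 0"
  proof (rule ccontr)
    assume "det4 uj um zj zm \<noteq> 0"
    then obtain n where "(uj$n = 1 \<and> um$n = 0 \<and> zj$n = 0 \<and> zm$n = 0) \<or> (uj$n = 0 \<and> um$n = 1 \<and> zj$n = 0 \<and> zm$n = 0)
     \<or> (uj$n = 0 \<and> um$n = 0 \<and> zj$n = 1 \<and> zm$n = 0) \<or> (uj$n = 0 \<and> um$n = 0 \<and> zj$n = 0 \<and> zm$n = 1)"
      using basis[OF U(1) U(2) Z(1) Z(2)] unfolding unit4_def by blast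
    then show False using cov[of n] by (elim disjE) (simp_all add: uj um zj zm)
  qed
  have Q2: "det4 uj ul zj zl = 0"
  proof (rule ccontr)
    assume "det4 uj ul zj zl \<noteq> 0"
    then obtain n where "(uj$n = 1 \<and> ul$n = 0 \<and> zj$n = 0 \<and> zl$n = 0) \<or> (uj$n = 0 \<and> ul$n = 1 \<and> zj$n = 0 \<and> zl$n = 0)
     \<or> (uj$n = 0 \<and> ul$n = 0 \<and> zj$n = 1 \<and> zl$n = 0) \<or> (uj$n = 0 \<and> ul$n = 0 \<and> zj$n = 0 \<and> zl$n = 1)"
      using basis[OF U(1) U(3) Z(1) Z(3)] unfolding unit4_def by blast
    then show False using cov[of n] by (elim disjE) (simp_all add: uj ul zj zl)
  qed
  have Q3: "det4 um ul zm zl = 0"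
  proof (rule ccontr)
    assume "det4 um ul zm zl \<noteq> 0"
    then obtain n where "(um$n = 1 \<and> ul$n = 0 \<and> zm$n = 0 \<and> zl$n = 0) \<or> (um$n = 0 \<and> ul$n = 1 \<and> zm$n = 0 \<and> zl$n = 0)
     \<or> (um$n = 0 \<and> ul$n = 0 \<and> zm$n = 1 \<and> zl$n = 0) \<or> (um$n = 0 \<and> ul$n = 0 \<and> zm$n = 0 \<and> zl$n = 1)"
      using basis[OF U(2) U(3) Z(2) Z(3)] unfolding unit4_def by blast
    then show False using cov[of n] by (elim disjE) (simp_all add: um ul zm zl)
  qed
  have e1: "m3 (um - uj) zj zm j m l = zj$l * zm$j - zj$m * zm$l"
    unfolding m3_def using uj um zj zm by (simp add: algebra_simps)
  have e2: "m3 (ul - uj) zj zl j m l = zj$l * zl$m - zj$m * zl$j"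
    unfolding m3_def using uj ul zj zl by (simp add: algebra_simps)
  have e3: "m3 (ul - um) zm zl j m l = zm$j * zl$m - zm$l * zl$j"
    unfolding m3_def using um ul zm zl by (simp add: algebra_simps)
  have q1: "zj$l * zm$j = zj$m * zm$l" using Q1 det4_uu[OF d uj(1) um(1) zj(1) zm(1)] e1 by auto
  have q2: "zj$l * zl$m = zj$m * zl$j" using Q2 det4_uu[OF d uj(1) ul(1) zj(1) zl(1)] e2 by auto
  have q3: "zm$j * zl$m = zm$l * zl$j" using Q3 det4_uu[OF d um(1) ul(1) zm(1) zl(1)] e3 by auto
  have alg: "zj$m = zj$l \<and> zm$j = zj$m \<and> zm$l = zj$m \<and> zl$j = zj$m \<and> zl$m = zj$m"
    by (rule CPalg) (use nn s1 s2 q1 q2 q3 in \<open>auto simp: algebra_simps\<close>)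
  have e4: "m3 (um - uj) zj zl j m l = zj$l * zl$m + zj$l * zl$j"
    unfolding m3_def using uj um zj zl by (simp add: algebra_simps)
  have "zj$l * zl$m + zj$l * zl$j > 0" using nn by (simp add: add_pos_pos)
  then have Q4: "det4 uj um zj zl \<noteq> 0" using det4_uu[OF d uj(1) um(1) zj(1) zl(1)] e4 by auto
  then obtain n where nn4: "(uj$n = 1 \<and> um$n = 0 \<and> zj$n = 0 \<and> zl$n = 0) \<or> (uj$n = 0 \<and> um$n = 1 \<and> zj$n = 0 \<and> zl$n = 0)
     \<or> (uj$n = 0 \<and> um$n = 0 \<and> zj$n = 1 \<and> zl$n = 0) \<or> (uj$n = 0 \<and> um$n = 0 \<and> zj$n = 0 \<and> zl$n = 1)"
    using basis[OF U(1) U(2) Z(1) Z(3)] unfolding unit4_def by blast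
  have B1: "zj$l = 1" using nn4 cov[of n] by (elim disjE) (simp_all add: uj um zj zl)
  have vals: "zj$m = 1" "zj$l = 1" "zm$j = 1" "zm$l = 1" "zl$j = 1" "zl$m = 1" using alg B1 by auto
  have two: "x \<in> std_cross_polytope" if "x$c \<in> {0,1}" "x$j \<in> {0,1}" "x$m \<in> {0,1}" "x$l \<in> {0,1}"
     "x$c + x$j + x$m + x$l = 2" for x
  proof -
    have "\<forall>n. x$n = 0 \<or> x$n = 1"
    proof
      fix n show "x$n = 0 \<or> x$n = 1" using cov[of n] that(1-4) by (elim disjE) simp_all
    qed
    moreover have "x$1 + x$2 + x$3 + x$4 = 2" using that sum4_perm[OF d, of x] by simp
    ultimately show ?thesis using CP_mem by blast
  qed
  have sub: "T \<subseteq> std_cross_polytope"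
  proof
    fix x assume "x \<in> T"
    then have "x = uj \<or> x = um \<or> x = ul \<or> x = zj \<or> x = zm \<or> x = zl" by (rule onlyT)
    then show "x \<in> std_cross_polytope" using two uj um ul zj zm zl vals by auto
  qed
  have six: "{uj,um,ul,zj,zm,zl} \<subseteq> T" using U Z by auto
  have ne: "\<And>x y n. x$n \<noteq> y$n \<Longrightarrow> x \<noteq> (y::int^4)" by auto
  have dist6: "distinct [uj,um,ul,zj,zm,zl]"
    using ne[where x=uj and y=um and n=j] ne[where x=uj and y=ul and n=j] ne[where x=um and y=ul and n=m] ne[where x=uj and y=zj and n=c] ne[where x=uj and y=zm and n=c] ne[where x=uj and y=zl and n=c]
      ne[where x=um and y=zj and n=c] ne[where x=um and y=zm and n=c] ne[where x=um and y=zl and n=c] ne[where x=ul and y=zj and n=c] ne[where x=ul and y=zm and n=c] ne[where x=ul and y=zl and n=c]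
      ne[where x=zj and y=zm and n=j] ne[where x=zj and y=zl and n=j] ne[where x=zm and y=zl and n=m] uj um ul zj zm zl vals by simp
  have "card {uj,um,ul,zj,zm,zl} = 6" using distinct_card[OF dist6] by simp
  then have "card T \<ge> 6" using card_mono[OF fin six] by simp
  moreover have "finite std_cross_polytope" unfolding std_cross_polytope_def by simp
  ultimately show ?thesis using card_seteq[OF _ sub] card_CP by simp
qed

lemma ctx_dist: assumes "ctx c a t1 t2 t3" shows "t1 \<noteq> t2" "t1 \<noteq> t3" "t2 \<noteq> t3"
proof -
  have D: "det4 a t1 t2 t3 \<noteq> 0" using assms unfolding ctx_def by auto
  show "t1 \<noteq> t2" using D det4_rep23[of a t1 t3] by auto
  show "t1 \<noteq> t3" using D det4_rep24[of a t1 t2] by auto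
  show "t2 \<noteq> t3" using D det4_rep34[of a t1 t2] by auto
qed

lemma CPcase:
  assumes C: "ctx c a t1 t2 t3" and c01: "col01 c" and d: "distinct [c,j,m,l]"
    and U: "u1 \<in> T" "u2 \<in> T" "u3 \<in> T"
    and u1: "u1$c = 1" "u1$j = 1" "u1$m = 0" "u1$l = 0"
    and u2: "u2$c = 1" "u2$j = 0" "u2$m = 1" "u2$l = 0"
    and u3: "u3$c = 1" "u3$j = 0" "u3$m = 0" "u3$l = 1"
    and onlyO: "\<And>x. x \<in> T \<Longrightarrow> x$c = 1 \<Longrightarrow> x = u1 \<or> x = u2 \<or> x = u3"
  shows GOAL
proof -
  have cov: "\<And>n. n = c \<or> n = j \<or> n = m \<or> n = l" using cover4[OF d] by blast
  have dj: "c \<noteq> j" "c \<noteq> m" "c \<noteq> l" "j \<noteq> m" "j \<noteq> l" "m \<noteq> l" using d by auto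
  have c01': "\<And>x. x \<in> T \<Longrightarrow> x$c = 0 \<or> x$c = 1" using c01 unfolding col01_def by blast
  show ?thesis
  proof (cases "\<exists>z1 z2. z1 \<in> T \<and> z2 \<in> T \<and> z1 \<noteq> z2 \<and> z1$c = 0 \<and> z2$c = 0 \<and> z1$j = 0 \<and> z2$j = 0")
    case True
    then obtain z1 z2 where z: "z1 \<in> T" "z2 \<in> T" "z1 \<noteq> z2" "z1$c = 0" "z2$c = 0" "z1$j = 0" "z2$j = 0" by blast
    show ?thesis
    proof (rule mkFB[of c j u1 z1 z2])
      fix x assume x: "x \<in> T" "x \<noteq> u1"
      show "x$c = 0 \<or> x$j = 0" using c01'[OF x(1)] onlyO[OF x(1)] x u2 u3 by auto
    qed (use dj U u1 z in auto)
  next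
    case nj: False
    show ?thesis
    proof (cases "\<exists>z1 z2. z1 \<in> T \<and> z2 \<in> T \<and> z1 \<noteq> z2 \<and> z1$c = 0 \<and> z2$c = 0 \<and> z1$m = 0 \<and> z2$m = 0")
      case True
      then obtain z1 z2 where z: "z1 \<in> T" "z2 \<in> T" "z1 \<noteq> z2" "z1$c = 0" "z2$c = 0" "z1$m = 0" "z2$m = 0" by blast
      show ?thesis
      proof (rule mkFB[of c m u2 z1 z2])
        fix x assume x: "x \<in> T" "x \<noteq> u2"
        show "x$c = 0 \<or> x$m = 0" using c01'[OF x(1)] onlyO[OF x(1)] x u1 u3 by auto
      qed (use dj U u2 z in auto)
    next
      case nm: False
      show ?thesis
      proof (cases "\<exists>z1 z2. z1 \<in> T \<and> z2 \<in> T \<and> z1 \<noteq> z2 \<and> z1$c = 0 \<and> z2$c = 0 \<and> z1$l = 0 \<and> z2$l = 0")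
        case True
        then obtain z1 z2 where z: "z1 \<in> T" "z2 \<in> T" "z1 \<noteq> z2" "z1$c = 0" "z2$c = 0" "z1$l = 0" "z2$l = 0" by blast
        show ?thesis
        proof (rule mkFB[of c l u3 z1 z2])
          fix x assume x: "x \<in> T" "x \<noteq> u3"
          show "x$c = 0 \<or> x$l = 0" using c01'[OF x(1)] onlyO[OF x(1)] x u1 u2 by auto
        qed (use dj U u3 z in auto)
      next
        case nl: False
        from C have CT: "t1 \<in> T" "t2 \<in> T" "t3 \<in> T" and t: "t1$c = 0" "t2$c = 0" "t3$c = 0"
          unfolding ctx_def by auto
        have td: "t1 \<noteq> t2" "t1 \<noteq> t3" "t2 \<noteq> t3" using ctx_dist[OF C] by auto
        have u23: "u2 \<noteq> u3" using u2 u3 by auto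
        have nc: "NC u2 u3 u1" by (rule NCg[OF U(2) U(3) U(1), of c j]) (use dj u1 u2 u3 u23 in auto)
        have hit: "z$j = 0 \<or> z$m = 0 \<or> z$l = 0" if z: "z \<in> T" "z$c = 0" for z
        proof -
          obtain n where "n \<noteq> c" "z$n = 0" using W3u[OF U(2) U(3) U(1) z(1) u2(1) u3(1) u1(1) z(2) nc] by blast
          then show ?thesis using cov[of n] by auto
        qed
        have h1: "t1$j = 0 \<or> t1$m = 0 \<or> t1$l = 0" by (rule hit[OF CT(1) t(1)])
        have h2: "t2$j = 0 \<or> t2$m = 0 \<or> t2$l = 0" by (rule hit[OF CT(2) t(2)])
        have h3: "t3$j = 0 \<or> t3$m = 0 \<or> t3$l = 0" by (rule hit[OF CT(3) t(3)])
        have uj: "\<And>z1 z2. z1 \<in> T \<Longrightarrow> z2 \<in> T \<Longrightarrow> z1$c = 0 \<Longrightarrow> z2$c = 0 \<Longrightarrow> z1$j = 0 \<Longrightarrow> z2$j = 0 \<Longrightarrow> z1 = z2"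
          using nj by blast
        have um: "\<And>z1 z2. z1 \<in> T \<Longrightarrow> z2 \<in> T \<Longrightarrow> z1$c = 0 \<Longrightarrow> z2$c = 0 \<Longrightarrow> z1$m = 0 \<Longrightarrow> z2$m = 0 \<Longrightarrow> z1 = z2"
          using nm by blast
        have ul: "\<And>z1 z2. z1 \<in> T \<Longrightarrow> z2 \<in> T \<Longrightarrow> z1$c = 0 \<Longrightarrow> z2$c = 0 \<Longrightarrow> z1$l = 0 \<Longrightarrow> z2$l = 0 \<Longrightarrow> z1 = z2"
          using nl by blast
        have cj: "\<not>(t1$j = 0 \<and> t2$j = 0)" "\<not>(t1$j = 0 \<and> t3$j = 0)" "\<not>(t2$j = 0 \<and> t3$j = 0)"
          using uj[OF CT(1) CT(2) t(1) t(2)] uj[OF CT(1) CT(3) t(1) t(3)] uj[OF CT(2) CT(3) t(2) t(3)] td by auto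
        have cm: "\<not>(t1$m = 0 \<and> t2$m = 0)" "\<not>(t1$m = 0 \<and> t3$m = 0)" "\<not>(t2$m = 0 \<and> t3$m = 0)"
          using um[OF CT(1) CT(2) t(1) t(2)] um[OF CT(1) CT(3) t(1) t(3)] um[OF CT(2) CT(3) t(2) t(3)] td by auto
        have cl: "\<not>(t1$l = 0 \<and> t2$l = 0)" "\<not>(t1$l = 0 \<and> t3$l = 0)" "\<not>(t2$l = 0 \<and> t3$l = 0)"
          using ul[OF CT(1) CT(2) t(1) t(2)] ul[OF CT(1) CT(3) t(1) t(3)] ul[OF CT(2) CT(3) t(2) t(3)] td by auto
        have ezj: "\<exists>zj\<in>{t1,t2,t3}. zj$j = 0 \<and> zj$m \<noteq> 0 \<and> zj$l \<noteq> 0" using h1 h2 h3 cj cm cl by auto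
        have ezm: "\<exists>zm\<in>{t1,t2,t3}. zm$m = 0 \<and> zm$j \<noteq> 0 \<and> zm$l \<noteq> 0" using h1 h2 h3 cj cm cl by auto
        have ezl: "\<exists>zl\<in>{t1,t2,t3}. zl$l = 0 \<and> zl$j \<noteq> 0 \<and> zl$m \<noteq> 0" using h1 h2 h3 cj cm cl by auto
        obtain zj where zj: "zj \<in> {t1,t2,t3}" "zj$j = 0" "zj$m \<noteq> 0" "zj$l \<noteq> 0" using ezj by blast
        obtain zm where zm: "zm \<in> {t1,t2,t3}" "zm$m = 0" "zm$j \<noteq> 0" "zm$l \<noteq> 0" using ezm by blast
        obtain zl where zl: "zl \<in> {t1,t2,t3}" "zl$l = 0" "zl$j \<noteq> 0" "zl$m \<noteq> 0" using ezl by blast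
        have zT: "zj \<in> T" "zm \<in> T" "zl \<in> T" "zj$c = 0" "zm$c = 0" "zl$c = 0" using zj zm zl CT t by auto
        have onlyT: "x = u1 \<or> x = u2 \<or> x = u3 \<or> x = zj \<or> x = zm \<or> x = zl" if x: "x \<in> T" for x
        proof (cases "x$c = 1")
          case True then show ?thesis using onlyO[OF x] by blast
        next
          case False
          then have xc: "x$c = 0" using c01'[OF x] by auto
          have "x$j = 0 \<or> x$m = 0 \<or> x$l = 0" by (rule hit[OF x xc])
          then show ?thesis using uj[OF x zT(1) xc zT(4)] um[OF x zT(2) xc zT(5)] ul[OF x zT(3) xc zT(6)]
            zj zm zl by auto
        qed
        have "T = std_cross_polytope"
          by (rule CPcore[OF d U u1 u2 u3 zT(1-3)]) (use zT zj zm zl onlyT in auto)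
        then show ?thesis by blast
      qed
    qed
  qed
qed

lemma B1core:
  assumes C: "ctx c a t1 t2 t3" and c01: "col01 c" and co: "col01O c j" and d: "distinct [c,j,m,l]"
    and A: "a1 \<in> T" "a2 \<in> T" "a1$c = 1" "a2$c = 1" "a1 \<noteq> a2" "a1$j = 0" "a2$j = 0" "a1$m = 1" "a2$m = 0"
    and K: "cc \<in> T" "cc$c = 1" "cc$j = 1" "cc$m = 0"
    and uniq: "\<And>x. x \<in> T \<Longrightarrow> x$c = 1 \<Longrightarrow> x$j = 1 \<Longrightarrow> x = cc"
    and tt: "ta \<in> T" "tb \<in> T" "ta \<noteq> tb" "ta$c = 0" "tb$c = 0" "ta$j \<noteq> 0" "tb$j \<noteq> 0"
  shows GOAL
proof -
  have cov: "\<And>n. n = c \<or> n = j \<or> n = m \<or> n = l" using cover4[OF d] by blast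
  have dj: "c \<noteq> j" "c \<noteq> m" "c \<noteq> l" "j \<noteq> m" "j \<noteq> l" "m \<noteq> l" using d by auto
  have c01': "\<And>x. x \<in> T \<Longrightarrow> x$c = 0 \<or> x$c = 1" using c01 unfolding col01_def by blast
  have co': "\<And>x. x \<in> T \<Longrightarrow> x$c = 1 \<Longrightarrow> x$j = 0 \<or> x$j = 1" using co unfolding col01O_def by blast
  have onlyA: "x = a1 \<or> x = a2" if x: "x \<in> T" "x$c = 1" "x$j = 0" for x
  proof (rule ccontr)
    assume h: "\<not> ?thesis"
    have D1: "Dp a1 a2 c j" by (rule W3D[OF A(1) A(2) K(1) tt(1) A(3) A(4) K(2) tt(4) A(5)]) (use dj A K tt in auto)
    have D2: "Dp a1 x c j" by (rule W3D[OF A(1) x(1) K(1) tt(1) A(3) x(2) K(2) tt(4)]) (use dj A K tt x h in auto)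
    have D3: "Dp a2 x c j" by (rule W3D[OF A(2) x(1) K(1) tt(1) A(4) x(2) K(2) tt(4)]) (use dj A K tt x h in auto)
    show False by (rule LINE3[OF A(1) A(2) x(1), of c j]) (use A x h dj D1 D2 D3 in auto)
  qed
  show ?thesis
  proof (cases "a1$l = 0 \<and> a2$l = 1 \<and> cc$l = 0")
    case True
    show ?thesis
    proof (rule CPcase[OF C c01 d K(1) A(1) A(2)])
      fix x assume x: "x \<in> T" "x$c = 1"
      show "x = cc \<or> x = a1 \<or> x = a2" using co'[OF x] uniq[OF x] onlyA[OF x] by auto
    qed (use K A True in auto)
  next
    case nu: False
    have nc: "NC a1 a2 cc" by (rule NCg[OF A(1) A(2) K(1), of c j]) (use dj A K in auto)
    have zm: "z$m = 0" if z: "z \<in> T" "z$c = 0" "z$j \<noteq> 0" for z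
    proof -
      obtain n where n: "n \<noteq> c" "z$n = 0"
        "(a1$n = 1 \<and> a2$n = 0 \<and> cc$n = 0) \<or> (a1$n = 0 \<and> a2$n = 1 \<and> cc$n = 0) \<or> (a1$n = 0 \<and> a2$n = 0 \<and> cc$n = 1)"
        using W3u[OF A(1) A(2) K(1) z(1) A(3) A(4) K(2) z(2) nc] by blast
      have nj: "n \<noteq> j" using n z by auto
      have n3: "\<not> (a1$n = 0 \<and> a2$n = 0)"
      proof
        assume "a1$n = 0 \<and> a2$n = 0"
        then have "a1 = a2" using heq3[OF A(1) A(2), of c j n] dj nj n A by auto
        then show False using A by simp
      qed
      have "n \<noteq> l"
      proof
        assume nl: "n = l"
        show False
        proof (cases "a1$l = 1")
          case True
          then have a2l: "a2$l = 0" using n n3 nl by auto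
          have "\<And>k. a2$k \<le> a1$k" by (rule le4[OF d]) (use A a2l nonneg[OF A(1)] in auto)
          then have "a2 = a1" using antichain[OF A(2) A(1)] by metis
          then show False using A by simp
        next
          case False
          then show False using n n3 nl nu by auto
        qed
      qed
      then show ?thesis using cov[of n] n nj by auto
    qed
    show ?thesis
    proof (rule mkFB[of c m a1 ta tb])
      fix x assume x: "x \<in> T" "x \<noteq> a1"
      show "x$c = 0 \<or> x$m = 0"
      proof (cases "x$c = 1")
        case True
        then have "x$j = 0 \<or> x$j = 1" using co'[OF x(1)] by simp
        then show ?thesis using uniq[OF x(1) True] onlyA[OF x(1) True] x K A by auto
      next
        case False then show ?thesis using c01'[OF x(1)] by auto
      qed
    qed (use dj A tt zm in auto)
  qed
qed

lemma B1case:
  assumes C: "ctx c a t1 t2 t3" and c01: "col01 c" and jc: "j \<noteq> c" and co: "col01O c j"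
    and A: "a1 \<in> T" "a2 \<in> T" "a1$c = 1" "a2$c = 1" "a1 \<noteq> a2" "a1$j = 0" "a2$j = 0"
    and K: "cc \<in> T" "cc$c = 1" "cc$j = 1"
    and uniq: "\<And>x. x \<in> T \<Longrightarrow> x$c = 1 \<Longrightarrow> x$j = 1 \<Longrightarrow> x = cc"
  shows GOAL
proof -
  have c01': "\<And>x. x \<in> T \<Longrightarrow> x$c = 0 \<or> x$c = 1" using c01 unfolding col01_def by blast
  have co': "\<And>x. x \<in> T \<Longrightarrow> x$c = 1 \<Longrightarrow> x$j = 0 \<or> x$j = 1" using co unfolding col01O_def by blast
  show ?thesis
  proof (cases "\<exists>z1 z2. z1 \<in> T \<and> z2 \<in> T \<and> z1 \<noteq> z2 \<and> z1$c = 0 \<and> z2$c = 0 \<and> z1$j = 0 \<and> z2$j = 0")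
    case True
    then obtain z1 z2 where z: "z1 \<in> T" "z2 \<in> T" "z1 \<noteq> z2" "z1$c = 0" "z2$c = 0" "z1$j = 0" "z2$j = 0" by blast
    show ?thesis
    proof (rule mkFB[of c j cc z1 z2])
      fix x assume x: "x \<in> T" "x \<noteq> cc"
      show "x$c = 0 \<or> x$j = 0"
      proof (cases "x$c = 1")
        case True then show ?thesis using co'[OF x(1) True] uniq[OF x(1) True] x by auto
      next
        case False then show ?thesis using c01'[OF x(1)] by auto
      qed
    qed (use jc K z in auto)
  next
    case False
    then have uj: "\<And>z1 z2. z1 \<in> T \<Longrightarrow> z2 \<in> T \<Longrightarrow> z1$c = 0 \<Longrightarrow> z2$c = 0 \<Longrightarrow> z1$j = 0 \<Longrightarrow> z2$j = 0 \<Longrightarrow> z1 = z2"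
      by blast
    from C have CT: "t1 \<in> T" "t2 \<in> T" "t3 \<in> T" and t: "t1$c = 0" "t2$c = 0" "t3$c = 0"
      unfolding ctx_def by auto
    have td: "t1 \<noteq> t2" "t1 \<noteq> t3" "t2 \<noteq> t3" using ctx_dist[OF C] by auto
    have c1: "\<not>(t1$j = 0 \<and> t2$j = 0)" "\<not>(t1$j = 0 \<and> t3$j = 0)" "\<not>(t2$j = 0 \<and> t3$j = 0)"
      using uj[OF CT(1) CT(2) t(1) t(2)] uj[OF CT(1) CT(3) t(1) t(3)] uj[OF CT(2) CT(3) t(2) t(3)] td by auto
    have "\<exists>ta tb. ta \<in> {t1,t2,t3} \<and> tb \<in> {t1,t2,t3} \<and> ta \<noteq> tb \<and> ta$j \<noteq> 0 \<and> tb$j \<noteq> 0"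
      using c1 td by blast
    then obtain ta tb where tt0: "ta \<in> {t1,t2,t3}" "tb \<in> {t1,t2,t3}" "ta \<noteq> tb" "ta$j \<noteq> 0" "tb$j \<noteq> 0" by blast
    have tt: "ta \<in> T" "tb \<in> T" "ta \<noteq> tb" "ta$c = 0" "tb$c = 0" "ta$j \<noteq> 0" "tb$j \<noteq> 0"
      using tt0 CT t by auto
    have nc: "NC a1 a2 cc" by (rule NCg[OF A(1) A(2) K(1), of c j]) (use jc A K in auto)
    obtain m where m: "m \<noteq> c" "ta$m = 0"
      "(a1$m = 1 \<and> a2$m = 0 \<and> cc$m = 0) \<or> (a1$m = 0 \<and> a2$m = 1 \<and> cc$m = 0) \<or> (a1$m = 0 \<and> a2$m = 0 \<and> cc$m = 1)"
      using W3u[OF A(1) A(2) K(1) tt(1) A(3) A(4) K(2) tt(4) nc] by blast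
    have mj: "m \<noteq> j" using m tt by auto
    obtain l where d: "distinct [c,j,m,l]" using dist3_ex[of c j m] jc m(1) mj by auto
    have n3: "\<not> (a1$m = 0 \<and> a2$m = 0)"
    proof
      assume "a1$m = 0 \<and> a2$m = 0"
      then have "a1 = a2" using heq3[OF A(1) A(2), of c j m] d A by auto
      then show False using A by simp
    qed
    show ?thesis
    proof (cases "a1$m = 1")
      case True
      have h: "a1$m = 1" "a2$m = 0" "cc$m = 0" using True m n3 by auto
      show ?thesis by (rule B1core[OF C c01 co d A h(1) h(2) K(1-3) h(3) uniq tt])
    next
      case False
      have h: "a2$m = 1" "a1$m = 0" "cc$m = 0" using False m n3 by auto
      show ?thesis by (rule B1core[OF C c01 co d A(2) A(1) A(4) A(3) A(5)[symmetric] A(7) A(6) h(1) h(2) K(1-3) h(3) uniq tt])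
    qed
  qed
qed

lemma DW:
  assumes C: "ctx c a t1 t2 t3" and T: "P \<in> T" "Q \<in> T" "z \<in> T"
    and c: "P$c = 1" "Q$c = 1" "z$c = 0" and ne: "P \<noteq> Q"
    and nocz: "\<And>n. n \<noteq> c \<Longrightarrow> \<not> (P$n = 0 \<and> Q$n = 0)"
  shows "\<exists>n. n \<noteq> c \<and> z$n = 0 \<and> ((P$n = 1 \<and> Q$n = 0) \<or> (P$n = 0 \<and> Q$n = 1))"
proof -
  obtain z' n where z': "z' \<in> T" "z'$c = 0" "z' \<noteq> z" and nc: "n \<noteq> c" and
    mm: "(P$n = 1 \<and> Q$n = 0 \<and> z$n = 0 \<and> z'$n = 0) \<or> (P$n = 0 \<and> Q$n = 1 \<and> z$n = 0 \<and> z'$n = 0) \<or>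
      (P$n = 0 \<and> Q$n = 0 \<and> z$n = 1 \<and> z'$n = 0) \<or> (P$n = 0 \<and> Q$n = 0 \<and> z$n = 0 \<and> z'$n = 1)"
    using W2u[OF C T c ne] by blast
  show ?thesis using mm nocz[OF nc] nc by auto
qed

lemma UNQ:
  assumes C: "ctx c a t1 t2 t3" and T: "P \<in> T" "Q \<in> T" "R \<in> T" and c: "P$c = 1" "Q$c = 1" "R$c = 1"
    and ne: "P \<noteq> R" "Q \<noteq> R"
    and noPR: "\<And>n. n \<noteq> c \<Longrightarrow> \<not> (P$n = 0 \<and> R$n = 0)" and noQR: "\<And>n. n \<noteq> c \<Longrightarrow> \<not> (Q$n = 0 \<and> R$n = 0)"
    and agr: "\<And>n. n \<noteq> c \<Longrightarrow> (P$n = Q$n \<longrightarrow> R$n = P$n) \<and> (P$n = R$n \<longrightarrow> Q$n = P$n) \<and> (Q$n = R$n \<longrightarrow> P$n = Q$n)"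
    and n: "n \<noteq> c" "(P$n = 1 \<and> Q$n = 0) \<or> (P$n = 0 \<and> Q$n = 1)"
    and n': "n' \<noteq> c" "(P$n' = 1 \<and> Q$n' = 0) \<or> (P$n' = 0 \<and> Q$n' = 1)"
  shows "n = n'"
proof (rule ccontr)
  assume nn: "n \<noteq> n'"
  from C have t1: "t1 \<in> T" "t1$c = 0" unfolding ctx_def by auto
  have Rgen: "R$k \<noteq> 0 \<and> R$k \<noteq> 1" if k: "k \<noteq> c" "(P$k = 1 \<and> Q$k = 0) \<or> (P$k = 0 \<and> Q$k = 1)" for k
  proof -
    have a1: "P$k = R$k \<longrightarrow> Q$k = P$k" and a2: "Q$k = R$k \<longrightarrow> P$k = Q$k" using agr[OF k(1)] by blast+
    have "R$k \<noteq> P$k" using a1 k(2) by linarith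
    moreover have "R$k \<noteq> Q$k" using a2 k(2) by linarith
    ultimately show ?thesis using k(2) by linarith
  qed
  have Rn: "R$n \<noteq> 0 \<and> R$n \<noteq> 1" by (rule Rgen[OF n])
  have Rn': "R$n' \<noteq> 0 \<and> R$n' \<noteq> 1" by (rule Rgen[OF n'])
  obtain p where p: "p \<noteq> c" "(P$p = 1 \<and> R$p = 0) \<or> (P$p = 0 \<and> R$p = 1)"
    using DW[OF C T(1) T(3) t1(1) c(1) c(3) t1(2) ne(1) noPR] by blast
  obtain q where q: "q \<noteq> c" "(Q$q = 1 \<and> R$q = 0) \<or> (Q$q = 0 \<and> R$q = 1)"
    using DW[OF C T(2) T(3) t1(1) c(2) c(3) t1(2) ne(2) noQR] by blast
  have Rp: "R$p = 0 \<or> R$p = 1" using p(2) by blast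
  have Rq: "R$q = 0 \<or> R$q = 1" using q(2) by blast
  have pn: "p \<noteq> n" "p \<noteq> n'" using Rp Rn Rn' by metis+
  have qn: "q \<noteq> n" "q \<noteq> n'" using Rq Rn Rn' by metis+
  have d: "distinct [c,n,n',p]" using n(1) n'(1) p(1) nn pn by simp
  have qp: "q = p" using cover4[OF d, of q] q(1) qn by blast
  have "P$p = Q$p" using p(2) q(2) unfolding qp by linarith
  then have "R$p = P$p" using agr[OF p(1)] by blast
  then show False using p(2) by linarith
qed

lemma Lcore:
  assumes C: "ctx c a t1 t2 t3" and T: "x \<in> T" "y \<in> T" "w \<in> T" and c: "x$c = 1" "y$c = 1" "w$c = 1"
    and ne: "x \<noteq> y" "x \<noteq> w" "y \<noteq> w"
    and nxy: "\<And>n. n \<noteq> c \<Longrightarrow> \<not> (x$n = 0 \<and> y$n = 0)"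
    and nxw: "\<And>n. n \<noteq> c \<Longrightarrow> \<not> (x$n = 0 \<and> w$n = 0)"
    and nyw: "\<And>n. n \<noteq> c \<Longrightarrow> \<not> (y$n = 0 \<and> w$n = 0)"
    and agr: "\<And>n. n \<noteq> c \<Longrightarrow> (x$n = y$n \<longrightarrow> w$n = x$n) \<and> (x$n = w$n \<longrightarrow> y$n = x$n) \<and> (y$n = w$n \<longrightarrow> x$n = y$n)"
  shows False
proof -
  from C have CT: "t1 \<in> T" "t2 \<in> T" "t3 \<in> T" and t: "t1$c = 0" "t2$c = 0" "t3$c = 0"
    and D: "det4 a t1 t2 t3 \<noteq> 0" unfolding ctx_def by auto
  have agr2: "(x$n = w$n \<longrightarrow> y$n = x$n) \<and> (x$n = y$n \<longrightarrow> w$n = x$n) \<and> (w$n = y$n \<longrightarrow> x$n = w$n)"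
    if "n \<noteq> c" for n
  proof -
    have h: "x$n = y$n \<longrightarrow> w$n = x$n" "x$n = w$n \<longrightarrow> y$n = x$n" "y$n = w$n \<longrightarrow> x$n = y$n"
      using agr[OF that] by blast+
    show ?thesis
    proof (intro conjI impI)
      assume "x$n = w$n" then show "y$n = x$n" using h(2) by blast
    next
      assume "x$n = y$n" then show "w$n = x$n" using h(1) by blast
    next
      assume e: "w$n = y$n"
      then have "y$n = w$n" by (rule sym)
      then have "x$n = y$n" using h(3) by blast
      then show "x$n = w$n" using e by simp
    qed
  qed
  have nwy: "\<And>n. n \<noteq> c \<Longrightarrow> \<not> (w$n = 0 \<and> y$n = 0)" using nyw by blast
  obtain n1 where n1: "n1 \<noteq> c" "t1$n1 = 0" "(x$n1 = 1 \<and> y$n1 = 0) \<or> (x$n1 = 0 \<and> y$n1 = 1)"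
    using DW[OF C T(1) T(2) CT(1) c(1) c(2) t(1) ne(1) nxy] by blast
  obtain n2 where n2: "n2 \<noteq> c" "t2$n2 = 0" "(x$n2 = 1 \<and> y$n2 = 0) \<or> (x$n2 = 0 \<and> y$n2 = 1)"
    using DW[OF C T(1) T(2) CT(2) c(1) c(2) t(2) ne(1) nxy] by blast
  obtain n3 where n3: "n3 \<noteq> c" "t3$n3 = 0" "(x$n3 = 1 \<and> y$n3 = 0) \<or> (x$n3 = 0 \<and> y$n3 = 1)"
    using DW[OF C T(1) T(2) CT(3) c(1) c(2) t(3) ne(1) nxy] by blast
  obtain m1 where m1: "m1 \<noteq> c" "t1$m1 = 0" "(x$m1 = 1 \<and> w$m1 = 0) \<or> (x$m1 = 0 \<and> w$m1 = 1)"
    using DW[OF C T(1) T(3) CT(1) c(1) c(3) t(1) ne(2) nxw] by blast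
  obtain m2 where m2: "m2 \<noteq> c" "t2$m2 = 0" "(x$m2 = 1 \<and> w$m2 = 0) \<or> (x$m2 = 0 \<and> w$m2 = 1)"
    using DW[OF C T(1) T(3) CT(2) c(1) c(3) t(2) ne(2) nxw] by blast
  obtain m3 where m3: "m3 \<noteq> c" "t3$m3 = 0" "(x$m3 = 1 \<and> w$m3 = 0) \<or> (x$m3 = 0 \<and> w$m3 = 1)"
    using DW[OF C T(1) T(3) CT(3) c(1) c(3) t(3) ne(2) nxw] by blast
  have u1: "n2 = n1" by (rule UNQ[OF C T c ne(2) ne(3) nxw nyw agr n2(1) n2(3) n1(1) n1(3)])
  have u2: "n3 = n1" by (rule UNQ[OF C T c ne(2) ne(3) nxw nyw agr n3(1) n3(3) n1(1) n1(3)])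
  have v1: "m2 = m1" by (rule UNQ[OF C T(1) T(3) T(2) c(1) c(3) c(2) ne(1) ne(3)[symmetric] nxy nwy agr2 m2(1) m2(3) m1(1) m1(3)])
  have v2: "m3 = m1" by (rule UNQ[OF C T(1) T(3) T(2) c(1) c(3) c(2) ne(1) ne(3)[symmetric] nxy nwy agr2 m3(1) m3(3) m1(1) m1(3)])
  have nm: "n1 \<noteq> m1"
  proof
    assume e: "n1 = m1"
    have m1': "(x$n1 = 1 \<and> w$n1 = 0) \<or> (x$n1 = 0 \<and> w$n1 = 1)" using m1(3) unfolding e .
    have "y$n1 = w$n1" using n1(3) m1' by linarith
    then have "x$n1 = y$n1" using agr[OF n1(1)] by blast
    then show False using n1(3) by linarith
  qed
  have z1: "t1$n1 = 0" "t2$n1 = 0" "t3$n1 = 0" using n1(2) n2(2) n3(2) u1 u2 by simp_all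
  have z2: "t1$m1 = 0" "t2$m1 = 0" "t3$m1 = 0" using m1(2) m2(2) m3(2) v1 v2 by simp_all
  have "det4 a t1 t2 t3 = 0" by (rule det4_z2[OF nm z1 z2])
  then show False using D by simp
qed

lemma Lcase:
  assumes C: "ctx c a t1 t2 t3" and c01: "col01 c" and T: "x \<in> T" "y \<in> T" "w \<in> T"
    and c: "x$c = 1" "y$c = 1" "w$c = 1" and ne: "x \<noteq> y" "x \<noteq> w" "y \<noteq> w"
    and hNC: "\<And>P Q R. P \<in> T \<Longrightarrow> Q \<in> T \<Longrightarrow> R \<in> T \<Longrightarrow> P$c = 1 \<Longrightarrow> Q$c = 1 \<Longrightarrow> R$c = 1 \<Longrightarrow> \<not> NC P Q R"
  shows GOAL
proof -
  have allz: "\<And>u. u \<in> T \<Longrightarrow> u$c = 1 \<Longrightarrow> u$n = 0"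
    if P: "P \<in> T" "Q \<in> T" "P$c = 1" "Q$c = 1" "P \<noteq> Q" "n \<noteq> c" "P$n = 0" "Q$n = 0" for P Q n
  proof (rule ccontr)
    fix u assume u: "u \<in> T" "u$c = 1" "u$n \<noteq> 0"
    have "NC P Q u" by (rule NCg[OF P(1) P(2) u(1), of c n]) (use P u in auto)
    then show False using hNC[OF P(1) P(2) u(1) P(3) P(4) u(2)] by simp
  qed
  show ?thesis
  proof (cases "\<exists>n. n \<noteq> c \<and> ((x$n = 0 \<and> y$n = 0) \<or> (x$n = 0 \<and> w$n = 0) \<or> (y$n = 0 \<and> w$n = 0))")
    case True
    then obtain n where n: "n \<noteq> c" "(x$n = 0 \<and> y$n = 0) \<or> (x$n = 0 \<and> w$n = 0) \<or> (y$n = 0 \<and> w$n = 0)" by blast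
    have Oj: "u$n = 0" if u: "u \<in> T" "u$c = 1" for u
    proof -
      { assume h: "x$n = 0 \<and> y$n = 0"
        have ?thesis by (rule allz[OF T(1) T(2) c(1) c(2) ne(1) n(1) _ _ u]) (use h in auto) }
      moreover
      { assume h: "x$n = 0 \<and> w$n = 0"
        have ?thesis by (rule allz[OF T(1) T(3) c(1) c(3) ne(2) n(1) _ _ u]) (use h in auto) }
      moreover
      { assume h: "y$n = 0 \<and> w$n = 0"
        have ?thesis by (rule allz[OF T(2) T(3) c(2) c(3) ne(3) n(1) _ _ u]) (use h in auto) }
      ultimately show ?thesis using n(2) by blast
    qed
    show ?thesis by (rule S1[OF C c01 n(1) T c ne Oj])
  next
    case False
    have agr: "(x$n = y$n \<longrightarrow> w$n = x$n) \<and> (x$n = w$n \<longrightarrow> y$n = x$n) \<and> (y$n = w$n \<longrightarrow> x$n = y$n)"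
      if n: "n \<noteq> c" for n
    proof (intro conjI impI)
      assume e: "x$n = y$n"
      show "w$n = x$n"
      proof (rule ccontr)
        assume "w$n \<noteq> x$n"
        then have "NC x y w" by (intro NCg[OF T(1) T(2) T(3), of c n]) (use n c e ne in auto)
        then show False using hNC[OF T c] by simp
      qed
    next
      assume e: "x$n = w$n"
      show "y$n = x$n"
      proof (rule ccontr)
        assume "y$n \<noteq> x$n"
        then have "NC x w y" by (intro NCg[OF T(1) T(3) T(2), of c n]) (use n c e ne in auto)
        then show False using hNC[OF T(1) T(3) T(2) c(1) c(3) c(2)] by simp
      qed
    next
      assume e: "y$n = w$n"
      show "x$n = y$n"
      proof (rule ccontr)
        assume "x$n \<noteq> y$n"
        then have "NC y w x" by (intro NCg[OF T(2) T(3) T(1), of c n]) (use n c e ne in auto)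
        then show False using hNC[OF T(2) T(3) T(1) c(2) c(3) c(1)] by simp
      qed
    qed
    have "False" by (rule Lcore[OF C T c ne _ _ _ agr]) (use False in auto)
    then show ?thesis by simp
  qed
qed

lemma stepB:
  assumes C: "ctx c a t1 t2 t3" and c01: "col01 c"
  shows GOAL
proof -
  from C have aT: "a \<in> T" "a$c = 1" and t1: "t1 \<in> T" "t1$c = 0" unfolding ctx_def by auto
  have c01': "\<And>x. x \<in> T \<Longrightarrow> x$c = 0 \<or> x$c = 1" using c01 unfolding col01_def by blast
  show ?thesis
  proof (cases "\<forall>x\<in>T. x$c \<noteq> 0 \<longrightarrow> x = a")
    case True
    show ?thesis by (rule mkB1[OF aT]) (use True in blast)
  next
    case False
    then obtain o' where o': "o' \<in> T" "o'$c \<noteq> 0" "o' \<noteq> a" by blast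
    have o'c: "o'$c = 1" using c01'[OF o'(1)] o'(2) by auto
    show ?thesis
    proof (cases "\<forall>x\<in>T. x$c = 1 \<longrightarrow> x = a \<or> x = o'")
      case True
      show ?thesis by (rule two_O[OF C c01 o'(1) o'c o'(3)]) (use True in blast)
    next
      case False
      then obtain o'' where o'': "o'' \<in> T" "o''$c = 1" "o'' \<noteq> a" "o'' \<noteq> o'" by blast
      show ?thesis
      proof (cases "\<exists>P Q R. P\<in>T \<and> Q\<in>T \<and> R\<in>T \<and> P$c = 1 \<and> Q$c = 1 \<and> R$c = 1 \<and> NC P Q R")
        case True
        then obtain P Q R where PQR: "P\<in>T" "Q\<in>T" "R\<in>T" "P$c = 1" "Q$c = 1" "R$c = 1" "NC P Q R" by blast
        obtain j where "Zo c j" using Z01o[OF t1 PQR] by blast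
        then obtain a1 a2 where jc: "j \<noteq> c" and co: "col01O c j"
          and A: "a1 \<in> T" "a2 \<in> T" "a1$c = 1" "a2$c = 1" "a1 \<noteq> a2" "a1$j = 0" "a2$j = 0"
          unfolding Zo_def by blast
        have co': "\<And>x. x \<in> T \<Longrightarrow> x$c = 1 \<Longrightarrow> x$j = 0 \<or> x$j = 1" using co unfolding col01O_def by blast
        show ?thesis
        proof (cases "\<exists>u v. u\<in>T \<and> v\<in>T \<and> u$c = 1 \<and> v$c = 1 \<and> u \<noteq> v \<and> u$j = 1 \<and> v$j = 1")
          case True
          then obtain u v where U: "u\<in>T" "v\<in>T" "u$c = 1" "v$c = 1" "u \<noteq> v" "u$j = 1" "v$j = 1" by blast
          have False by (rule B2case[OF C jc A U])
          then show ?thesis by simp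
        next
          case F2: False
          show ?thesis
          proof (cases "\<forall>x\<in>T. x$c = 1 \<longrightarrow> x$j = 0")
            case True
            show ?thesis by (rule S1[OF C c01 jc aT(1) o'(1) o''(1) aT(2) o'c o''(2)]) (use o' o'' True in auto)
          next
            case False
            then obtain cc where cc0: "cc \<in> T" "cc$c = 1" "cc$j \<noteq> 0" by blast
            have ccj: "cc$j = 1" using co'[OF cc0(1,2)] cc0(3) by auto
            have uniq: "x = cc" if "x \<in> T" "x$c = 1" "x$j = 1" for x
              using F2 that cc0 ccj by blast
            show ?thesis by (rule B1case[OF C c01 jc co A cc0(1) cc0(2) ccj uniq])
          qed
        qed
      next
        case False
        show ?thesis by (rule Lcase[OF C c01 aT(1) o'(1) o''(1) aT(2) o'c o''(2)]) (use o' o'' False in auto)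
      qed
    qed
  qed
qed

lemma nz_vec: "(v::'a::zero^'n)$k \<noteq> 0 \<Longrightarrow> v \<noteq> 0" by auto

lemma dot4_rv: "dot4 (rv g) (rv x) = real_of_int (dot4 g x)"
  by (simp add: dot4_def)

lemma key_int: assumes "g \<noteq> 0" shows "\<exists>x\<in>T. dot4 g x \<noteq> 0"
proof (rule ccontr)
  assume "\<not> ?thesis"
  then have "\<And>x. x \<in> T \<Longrightarrow> dot4 (rv g) (rv x) = 0" by (simp add: dot4_rv)
  then have "rv g = 0" by (rule key)
  then have "g = 0" by (simp add: vec_eq_iff)
  then show False using assms by simp
qed

lemma exists_basis: "\<exists>x1 x2 x3 x4. x1 \<in> T \<and> x2 \<in> T \<and> x3 \<in> T \<and> x4 \<in> T \<and> det4 x1 x2 x3 x4 \<noteq> 0"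
proof -
  have "T \<noteq> {}"
  proof
    assume "T = {}"
    then have "(ax 1 :: int^4) = 0" using key_int[of "ax 1"] by blast
    then have "(ax 1 :: int^4) $ 1 = 0" by simp
    then show False by (simp add: ax_def)
  qed
  then obtain x1 where x1: "x1 \<in> T" by blast
  obtain p where p: "x1$p \<noteq> 0" using nz[OF x1] by blast
  obtain q r s where dq: "distinct [p,q,r,s]" using dist1_ex by blast
  let ?g2 = "(x1$p) *s ax q - (x1$q) *s ax p :: int^4"
  have g2: "?g2 \<noteq> 0"
  proof
    assume "?g2 = 0"
    then have "?g2$q = 0" by simp
    moreover have "q \<noteq> p" using dq by auto
    ultimately show False using p by (simp add: ax_def)
  qed
  obtain x2 where x2: "x2 \<in> T" "dot4 ?g2 x2 \<noteq> 0" using key_int[OF g2] by blast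
  have m2ne: "m2 x1 x2 p q \<noteq> 0"
  proof -
    have nq: "q \<noteq> p" "r \<noteq> p" "r \<noteq> q" "s \<noteq> p" "s \<noteq> q" "s \<noteq> r" "p \<noteq> q" using dq by auto
    have "dot4 ?g2 x2 = x1$p * x2$q - x1$q * x2$p"
      using dot4_perm[OF dq, of ?g2 x2] by (simp add: ax_def nq)
    then show ?thesis using x2 unfolding m2_def by simp
  qed
  let ?g3 = "(\<chi> k. det4 (ax s) x1 x2 (ax k)) :: int^4"
  have "?g3$r \<noteq> 0"
  proof -
    have dd: "distinct [r,s,p,q]" using dq by auto
    have "det4 (ax r) (ax s) x1 x2 = - det4 (ax s) x1 x2 (ax r)" by (rule det4_rot)
    then show ?thesis using det4_axax2[OF dd, of x1 x2] m2ne by auto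
  qed
  then have g3: "?g3 \<noteq> 0" by (rule nz_vec)
  obtain x3 where x3: "x3 \<in> T" "dot4 ?g3 x3 \<noteq> 0" using key_int[OF g3] by blast
  have "det4 (ax s) x1 x2 x3 \<noteq> 0" using x3(2) det4_lin_last[of "ax s" x1 x2 x3] by simp
  then have nc: "NC x1 x2 x3" unfolding NC_def by blast
  then obtain k where k: "det4 (ax k) x1 x2 x3 \<noteq> 0" unfolding NC_def by blast
  let ?g4 = "(\<chi> k. det4 x1 x2 x3 (ax k)) :: int^4"
  have "?g4$k \<noteq> 0" using k det4_rot[of "ax k" x1 x2 x3] by simp
  then have g4: "?g4 \<noteq> 0" by (rule nz_vec)
  obtain x4 where x4: "x4 \<in> T" "dot4 ?g4 x4 \<noteq> 0" using key_int[OF g4] by blast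
  have "det4 x1 x2 x3 x4 \<noteq> 0" using x4(2) det4_lin_last[of x1 x2 x3 x4] by simp
  then show ?thesis using x1 x2 x3 x4 by blast
qed

lemma exists_ctx: "\<exists>i p t1 t2 t3. ctx i p t1 t2 t3"
proof -
  obtain x1 x2 x3 x4 where X: "x1 \<in> T" "x2 \<in> T" "x3 \<in> T" "x4 \<in> T" and D: "det4 x1 x2 x3 x4 \<noteq> 0"
    using exists_basis by blast
  from basis[OF X D] obtain m where
    m: "(x1$m = 1 \<and> x2$m = 0 \<and> x3$m = 0 \<and> x4$m = 0) \<or> (x1$m = 0 \<and> x2$m = 1 \<and> x3$m = 0 \<and> x4$m = 0)
     \<or> (x1$m = 0 \<and> x2$m = 0 \<and> x3$m = 1 \<and> x4$m = 0) \<or> (x1$m = 0 \<and> x2$m = 0 \<and> x3$m = 0 \<and> x4$m = 1)"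
    unfolding unit4_def by blast
  have D2: "det4 x2 x1 x3 x4 \<noteq> 0" using D by (metis ne12)
  have D3: "det4 x3 x1 x2 x4 \<noteq> 0" using D by (metis ne12 ne23)
  have D4: "det4 x4 x1 x2 x3 \<noteq> 0" using D det4_rot[of x4 x1 x2 x3] by simp
  show ?thesis
  proof -
    { assume h: "x1$m = 1 \<and> x2$m = 0 \<and> x3$m = 0 \<and> x4$m = 0"
      have "ctx m x1 x2 x3 x4" unfolding ctx_def using X D h by auto }
    moreover
    { assume h: "x1$m = 0 \<and> x2$m = 1 \<and> x3$m = 0 \<and> x4$m = 0"
      have "ctx m x2 x1 x3 x4" unfolding ctx_def using X D2 h by auto }
    moreover
    { assume h: "x1$m = 0 \<and> x2$m = 0 \<and> x3$m = 1 \<and> x4$m = 0"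
      have "ctx m x3 x1 x2 x4" unfolding ctx_def using X D3 h by auto }
    moreover
    { assume h: "x1$m = 0 \<and> x2$m = 0 \<and> x3$m = 0 \<and> x4$m = 1"
      have "ctx m x4 x1 x2 x3" unfolding ctx_def using X D4 h by auto }
    ultimately show ?thesis using m by blast
  qed
qed

theorem main_bfc: GOAL
proof -
  obtain i p t1 t2 t3 where "ctx i p t1 t2 t3" using exists_ctx by blast
  then obtain c a s1 s2 s3 where "ctx c a s1 s2 s3" "col01 c" using z01_1 by blast
  then show ?thesis by (rule stepB)
qed
end

lemma dot4_smul_ax: "dot4 a (s *\<^sub>R (ax k :: real^4)) = s * a$k"
  using ex4[of k] by (elim disjE) (simp_all add: dot4_def ax_def)

lemma bfacet_bfc:
  fixes \<tau> :: "(int ^ 4) set"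
  assumes "B_facet \<tau>"
  shows "\<exists>al b. bfc \<tau> al b"
proof -
  from assms obtain a bb where fin: "finite \<tau>" and nn: "nonneg_pts \<tau>" and apos: "\<forall>j. 0 < a$j"
    and hull: "affine hull (rvec ` \<tau>) = {x. a \<bullet> x = bb}"
    and simp: "\<forall>S\<subseteq>\<tau>. is_simplex (CARD(4) - 1) S \<longrightarrow> B_simplex S"
    unfolding B_facet_def by blast
  have H: "v \<in> affine hull (rvec ` \<tau>) \<longleftrightarrow> dot4 a v = bb" for v using hull by (simp add: inner_dot4)
  have hyp: "dot4 a (rv x) = bb" if "x \<in> \<tau>" for x
    using H[of "rv x"] hull_inc[of "rvec x" "rvec ` \<tau>" affine] that rv_rvec by auto
  have van: "dot4 f v = 0" if f: "\<And>x. x \<in> \<tau> \<Longrightarrow> dot4 f (rv x) = 0" and v: "dot4 a v = bb" for f v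
  proof -
    have "rvec ` \<tau> \<subseteq> {v. f \<bullet> v = 0}" using f rv_rvec by (auto simp: inner_dot4)
    then have "affine hull (rvec ` \<tau>) \<subseteq> {v. f \<bullet> v = 0}" by (rule hull_minimal) (rule affine_hyperplane)
    then show ?thesis using H[of v] v by (auto simp: inner_dot4)
  qed
  have pk: "dot4 a ((bb / a$k) *\<^sub>R ax k) = bb" for k using apos[rule_format, of k] by (simp add: dot4_smul_ax)
  have ne: "\<tau> \<noteq> {}"
  proof
    assume "\<tau> = {}"
    then have "affine hull (rvec ` \<tau>) = {}" by simp
    then show False using H pk[of 1] by blast
  qed
  have nonneg: "0 \<le> x$i" if "x \<in> \<tau>" for x i using nn that unfolding nonneg_pts_def by blast
  have bpos: "0 < bb"
  proof -
    obtain x0 where x0: "x0 \<in> \<tau>" using ne by blast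
    have t: "0 \<le> a$k * real_of_int (x0$k)" for k
      using apos[rule_format, of k] nonneg[OF x0, of k] by (intro mult_nonneg_nonneg) auto
    have b0: "0 \<le> bb" using hyp[OF x0] t[of 1] t[of 2] t[of 3] t[of 4] by (simp add: dot4_def)
    have "bb \<noteq> 0"
    proof
      assume b0: "bb = 0"
      have z1: "x$1 = 0" if "x \<in> \<tau>" for x
      proof -
        have t: "0 \<le> a$k * real_of_int (x$k)" for k
          using apos[rule_format, of k] nonneg[OF that, of k] by (intro mult_nonneg_nonneg) auto
        have s: "a$1 * real_of_int (x$1) + a$2 * real_of_int (x$2) + a$3 * real_of_int (x$3) + a$4 * real_of_int (x$4) = 0"
          using hyp[OF that] b0 by (simp add: dot4_def)
        have "a$1 * real_of_int (x$1) = 0" using s t[of 1] t[of 2] t[of 3] t[of 4] by linarith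
        then show ?thesis using apos[rule_format, of 1] by simp
      qed
      let ?v = "(a$2) *\<^sub>R (ax 1 :: real^4) - (a$1) *\<^sub>R ax 2"
      have "dot4 a ?v = 0" by (simp add: dot4_def ax_def)
      then have "dot4 (ax 1) ?v = 0" using van[of "ax 1" ?v] z1 b0 by (simp add: dot4_def ax_def)
      then show False using apos[rule_format, of 2] by (simp add: dot4_def ax_def)
    qed
    then show ?thesis using b0 by simp
  qed
  have key: "f = 0" if f: "\<And>x. x \<in> \<tau> \<Longrightarrow> dot4 f (rv x) = 0" for f
  proof -
    have "f$k = 0" for k
    proof -
      have "dot4 f ((bb / a$k) *\<^sub>R ax k) = 0" by (rule van[OF f pk])
      then have "(bb / a$k) * f$k = 0" by (simp add: dot4_smul_ax)
      then show ?thesis using bpos apos[rule_format, of k] by simp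
    qed
    then show ?thesis by (simp add: vec_eq_iff)
  qed
  have basis: "unit4 x y z w" if T: "x\<in>\<tau>" "y\<in>\<tau>" "z\<in>\<tau>" "w\<in>\<tau>" and D: "det4 x y z w \<noteq> 0" for x y z w
  proof -
    have dst: "distinct [x,y,z,w]"
      using D det4_rep12[of x z w] det4_rep13[of x y w] det4_rep14[of x y z] det4_rep23[of x y w]
        det4_rep24[of x y z] det4_rep34[of x y z] by auto
    let ?S = "{x,y,z,w}"
    have cS: "card ?S = 4" using dst by simp
    have DR: "det4 (rv x) (rv y) (rv z) (rv w) \<noteq> 0" using D det4_rv by simp
    have rdst: "distinct [rv x, rv y, rv z, rv w]" using dst rv_inj by auto
    have nad: "\<not> affine_dependent (rvec ` ?S)"
    proof
      assume "affine_dependent (rvec ` ?S)"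
      then obtain U where U: "(\<exists>v\<in>rvec ` ?S. U v \<noteq> 0)" "sum (\<lambda>v. U v *\<^sub>R v) (rvec ` ?S) = 0"
        using affine_dependent_explicit_finite[of "rvec ` ?S"] by auto
      have im: "rvec ` ?S = {rv x, rv y, rv z, rv w}" using rv_rvec by auto
      have sm: "U (rv x) *\<^sub>R rv x + U (rv y) *\<^sub>R rv y + U (rv z) *\<^sub>R rv z + U (rv w) *\<^sub>R rv w = 0"
        using U(2) rdst unfolding im by (simp add: algebra_simps)
      have "U (rv x) = 0" using det4_comb1[of "U (rv x)" "rv x" "U (rv y)" "rv y" "U (rv z)" "rv z" "U (rv w)" "rv w"] sm DR
        by (simp add: det4_def m3_def)
      moreover have "U (rv y) = 0" using det4_comb2[of "rv x" "U (rv x)" "U (rv y)" "rv y" "U (rv z)" "rv z" "U (rv w)" "rv w"] sm DR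
        by (simp add: det4_def m3_def)
      moreover have "U (rv z) = 0" using det4_comb3[of "rv x" "rv y" "U (rv x)" "U (rv y)" "U (rv z)" "rv z" "U (rv w)" "rv w"] sm DR
        by (simp add: det4_def m3_def)
      moreover have "U (rv w) = 0" using det4_comb4[of "rv x" "rv y" "rv z" "U (rv x)" "U (rv y)" "U (rv z)" "U (rv w)" "rv w"] sm DR
        by (simp add: det4_def m3_def)
      ultimately show False using U(1) unfolding im by auto
    qed
    have "is_simplex 3 ?S" unfolding is_simplex_def using cS nad by simp
    then have "is_simplex (CARD(4) - 1) ?S" by simp
    moreover have "?S \<subseteq> \<tau>" using T by auto
    ultimately have "B_simplex ?S" using simp by blast
    then obtain k i where k: "is_simplex k ?S" and ci: "card {v\<in>?S. v$i = 0} = k" and one: "\<forall>v\<in>?S. v$i \<noteq> 0 \<longrightarrow> v$i = 1"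
      unfolding B_simplex_def by blast
    have "k = 3" using k cS unfolding is_simplex_def by simp
    then have c3: "(if x$i = 0 then 1 else 0) + (if y$i = 0 then 1 else 0) + (if z$i = 0 then 1 else 0) + (if w$i = 0 then 1 else 0) = (3::nat)"
      using ci card_filter4[OF dst, of "\<lambda>v. v$i = 0"] by simp
    have o: "x$i \<noteq> 0 \<Longrightarrow> x$i = 1" "y$i \<noteq> 0 \<Longrightarrow> y$i = 1" "z$i \<noteq> 0 \<Longrightarrow> z$i = 1" "w$i \<noteq> 0 \<Longrightarrow> w$i = 1"
      using one by auto
    show ?thesis unfolding unit4_def
    proof (rule exI[of _ i])
      show "(x$i = 1 \<and> y$i = 0 \<and> z$i = 0 \<and> w$i = 0) \<or> (x$i = 0 \<and> y$i = 1 \<and> z$i = 0 \<and> w$i = 0)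
     \<or> (x$i = 0 \<and> y$i = 0 \<and> z$i = 1 \<and> w$i = 0) \<or> (x$i = 0 \<and> y$i = 0 \<and> z$i = 0 \<and> w$i = 1)"
        using c3 o by (cases "x$i = 0"; cases "y$i = 0"; cases "z$i = 0"; cases "w$i = 0") simp_all
    qed
  qed
  have "bfc \<tau> a bb"
  proof
    show "finite \<tau>" by (rule fin)
    show "\<And>x i. x \<in> \<tau> \<Longrightarrow> 0 \<le> x$i" by (rule nonneg)
    show "\<And>k. 0 < a$k" using apos by blast
    show "0 < bb" by (rule bpos)
    show "\<And>x. x \<in> \<tau> \<Longrightarrow> dot4 a (rv x) = bb" by (rule hyp)
    show "\<And>f. (\<And>x. x \<in> \<tau> \<Longrightarrow> dot4 f (rv x) = 0) \<Longrightarrow> f = 0" by (rule key)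
    show "\<And>x y z w. x\<in>\<tau> \<Longrightarrow> y\<in>\<tau> \<Longrightarrow> z\<in>\<tau> \<Longrightarrow> w\<in>\<tau> \<Longrightarrow> det4 x y z w \<noteq> 0 \<Longrightarrow> unit4 x y z w"
      by (rule basis)
  qed
  then show ?thesis by blast
qed

theorem mainTheorem1:
  fixes \<tau> :: "(int ^ 4) set"
  assumes "B_facet \<tau>"
  shows "B1_facet \<tau> \<or> B2_facet \<tau> \<or> flat_border \<tau> \<or> \<tau> = std_cross_polytope"
proof -
  obtain al b where "bfc \<tau> al b" using bfacet_bfc[OF assms] by blast
  then interpret bfc \<tau> al b .
  show ?thesis by (rule main_bfc)
qed

end
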